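(* Let $\mathcal{A}$ be a finite list in a finitely generated abelian group $\Gamma$, and let $G_1,G_2$ be torsion-wise finite abelian groups. Then $$T^{G_1\times G_2}_{\mathcal{A}}(x,y)=\sum_{\mathcal{B}\subset\mathcal{A}}T^{G_1}_{\mathcal{B}}(0,y)\cdot T^{G_2}_{\mathcal{A}/\mathcal{B}}(x,0),$$ where $\mathcal{B}$ is regarded as a list in $\Gamma$ and $\mathcal{A}/\mathcal{B}$ as a list in $\Gamma/\langle\mathcal{B}\rangle$.
   Context: $G$ is torsion-wise finite if $G[d]=\{x\in G\mid dx=0\}$ is finite for all $d>0$. Sublists are distinguished by index. For a list $\mathcal{L}$ in a finitely generated abelian group $\Lambda$ and a sublist $\mathcal{S}$: $r_{\mathcal{S}}$ is the rank of $\langle\mathcal{S}\rangle$, $m(\mathcal{S};G)=\#\mathrm{Hom}((\Lambda/\langle\mathcal{S}\rangle)_{\mathrm{tor}},G)$, and $T^G_{\mathcal{L}}(x,y)=\sum_{\mathcal{S}\subset\mathcal{L}}m(\mathcal{S};G)(x-1)^{r_{\mathcal{L}}-r_{\mathcal{S}}}(y-1)^{\#\mathcal{S}-r_{\mathcal{S}}}$. The contraction $\mathcal{A}/\mathcal{B}$ is the list of cosets $\{\overline\alpha\mid\alpha\in\mathcal{A}\smallsetminus\mathcal{B}\}$ in $\Gamma/\langle\mathcal{B}\rangle$. *)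

theory Defs
  imports "HOL-Algebra.Algebra"
begin

definition fin_gen :: "('a, 'b) monoid_scheme \<Rightarrow> bool" where
  "fin_gen Lam \<longleftrightarrow> (\<exists>S. finite S \<and> S \<subseteq> carrier Lam \<and> generate Lam S = carrier Lam)"

definition torsion_wise_finite :: "('a, 'b) monoid_scheme \<Rightarrow> bool" where
  "torsion_wise_finite G \<longleftrightarrow>
     (\<forall>d::nat. d > 0 \<longrightarrow> finite {x \<in> carrier G. x [^]\<^bsub>G\<^esub> d = \<one>\<^bsub>G\<^esub>})"

definition z_indep :: "('a, 'b) monoid_scheme \<Rightarrow> 'a set \<Rightarrow> bool" where
  "z_indep Lam S \<longleftrightarrow> finite S \<and> S \<subseteq> carrier Lam \<and>
     (\<forall>n :: 'a \<Rightarrow> int. finprod Lam (\<lambda>s. s [^]\<^bsub>Lam\<^esub> n s) S = \<one>\<^bsub>Lam\<^esub> \<longrightarrow> (\<forall>s\<in>S. n s = 0))"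

definition grank :: "('a, 'b) monoid_scheme \<Rightarrow> 'a set \<Rightarrow> nat" where
  "grank Lam H = Sup {card S | S. S \<subseteq> H \<and> z_indep Lam S}"

definition tors :: "('a, 'b) monoid_scheme \<Rightarrow> ('a, 'b) monoid_scheme" where
  "tors Q = Q\<lparr>carrier := {x \<in> carrier Q. \<exists>n::nat. n > 0 \<and> x [^]\<^bsub>Q\<^esub> n = \<one>\<^bsub>Q\<^esub>}\<rparr>"

definition num_hom :: "('a, 'b) monoid_scheme \<Rightarrow> ('c, 'd) monoid_scheme \<Rightarrow> nat" where
  "num_hom T G = card (hom T G \<inter> extensional (carrier T))"

definition sub_elems :: "'a list \<Rightarrow> nat set \<Rightarrow> 'a set" where
  "sub_elems L I = (\<lambda>i. L ! i) ` I"

definition mult_m :: "('a, 'b) monoid_scheme \<Rightarrow> 'a set \<Rightarrow> ('c, 'd) monoid_scheme \<Rightarrow> nat" where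
  "mult_m Lam S GG = num_hom (tors (FactGroup Lam (generate Lam S))) GG"

(* T^G_L(x,y), sublists distinguished by index sets I *)
definition tutteG :: "('a, 'b) monoid_scheme \<Rightarrow> 'a list \<Rightarrow> ('c, 'd) monoid_scheme
    \<Rightarrow> 'e::comm_ring_1 \<Rightarrow> 'e \<Rightarrow> 'e" where
  "tutteG Lam L G x y =
     (\<Sum>I\<in>Pow {..<length L}.
        of_nat (mult_m Lam (sub_elems L I) G)
        * (x - 1) ^ (grank Lam (generate Lam (set L)) - grank Lam (generate Lam (sub_elems L I)))
        * (y - 1) ^ (card I - grank Lam (generate Lam (sub_elems L I))))"

definition sublist_idx :: "'a list \<Rightarrow> nat set \<Rightarrow> 'a list" where
  "sublist_idx A I = map (\<lambda>i. A ! i) (filter (\<lambda>i. i \<in> I) [0..<length A])"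

(* contraction A/B: cosets of the entries of A not in B, in \<Gamma>/<B> *)
definition contr :: "('a, 'b) monoid_scheme \<Rightarrow> 'a list \<Rightarrow> nat set \<Rightarrow> 'a set list" where
  "contr \<Gamma> A I = map (\<lambda>i. generate \<Gamma> (sub_elems A I) #>\<^bsub>\<Gamma>\<^esub> (A ! i))
                     (filter (\<lambda>i. i \<notin> I) [0..<length A])"

end

theory Submission
  imports Defs
begin


definition lin :: "('a,'b) monoid_scheme \<Rightarrow> 'i set \<Rightarrow> ('i \<Rightarrow> 'a) \<Rightarrow> ('i \<Rightarrow> int) \<Rightarrow> 'a" where
  "lin G I f n = finprod G (\<lambda>i. f i [^]\<^bsub>G\<^esub> n i) I"

definition indep_mod :: "('a,'b) monoid_scheme \<Rightarrow> 'a set \<Rightarrow> 'i set \<Rightarrow> ('i \<Rightarrow> 'a) \<Rightarrow> bool" where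
  "indep_mod G K I f \<longleftrightarrow> finite I \<and> f \<in> I \<rightarrow> carrier G \<and>
     (\<forall>n. lin G I f n \<in> K \<longrightarrow> (\<forall>i\<in>I. n i = 0))"

definition rkm :: "('a,'b) monoid_scheme \<Rightarrow> 'a set \<Rightarrow> 'a set \<Rightarrow> nat" where
  "rkm G K H = Sup {card S | S. S \<subseteq> H \<and> indep_mod G K S id}"

context comm_group begin

lemma lin_closed[simp]: "f \<in> I \<rightarrow> carrier G \<Longrightarrow> lin G I f n \<in> carrier G"
  unfolding lin_def by (auto intro!: finprod_closed)

lemma lin_add: "f \<in> I \<rightarrow> carrier G \<Longrightarrow> lin G I f (\<lambda>i. n i + m i) = lin G I f n \<otimes> lin G I f m"
proof -
  assume f: "f \<in> I \<rightarrow> carrier G"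
  have "lin G I f (\<lambda>i. n i + m i) = finprod G (\<lambda>i. f i [^] n i \<otimes> f i [^] m i) I"
    unfolding lin_def using f by (intro finprod_cong') (auto simp: int_pow_mult Pi_iff)
  also have "\<dots> = lin G I f n \<otimes> lin G I f m"
    unfolding lin_def using f by (subst finprod_multf) (auto simp: Pi_iff)
  finally show ?thesis .
qed

lemma finprod_int_pow: "f \<in> I \<rightarrow> carrier G \<Longrightarrow> finprod G (\<lambda>i. f i [^] (c::int)) I = (finprod G f I) [^] c"
proof (induct I rule: infinite_finite_induct)
  case (insert a A)
  then have "(\<Otimes>i\<in>insert a A. f i [^] c) = f a [^] c \<otimes> (\<Otimes>i\<in>A. f i [^] c)"
    by (intro finprod_insert) (auto simp: Pi_iff)
  then show ?case using insert by (simp add: int_pow_distrib Pi_iff)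
qed auto

lemma lin_smul: "f \<in> I \<rightarrow> carrier G \<Longrightarrow> lin G I f (\<lambda>i. c * n i) = (lin G I f n) [^] c"
  unfolding lin_def
  by (subst finprod_int_pow[symmetric]) (auto intro!: finprod_cong' simp: int_pow_pow mult.commute Pi_iff)

lemma lin_neg: "f \<in> I \<rightarrow> carrier G \<Longrightarrow> lin G I f (\<lambda>i. - n i) = inv (lin G I f n)"
  using lin_smul[of f I "-1" n] by (simp add: int_pow_neg)

lemma lin_zero_outside:
  assumes "finite I" "J \<subseteq> I" "\<And>i. i \<in> I - J \<Longrightarrow> n i = 0" "f \<in> I \<rightarrow> carrier G"
  shows "lin G I f n = lin G J f n"
  unfolding lin_def
  by (rule finprod_mono_neutral_cong_left[symmetric]) (use assms in \<open>auto simp: Pi_iff\<close>)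

lemma lin_single: "finite I \<Longrightarrow> i \<in> I \<Longrightarrow> f \<in> I \<rightarrow> carrier G \<Longrightarrow>
   lin G I f (\<lambda>j. if j = i then c else 0) = f i [^] c"
  unfolding lin_def
  by (subst finprod_singleton_swap[symmetric, of i I "\<lambda>j. f j [^] c"]) (auto intro!: finprod_cong' simp: Pi_iff)

lemma lin_sum:
  assumes "f \<in> I \<rightarrow> carrier G" "finite S"
  shows "lin G I f (\<lambda>i. \<Sum>s\<in>S. d s * n s i) = finprod G (\<lambda>s. lin G I f (n s) [^] d s) S"
  using assms(2)
proof (induct S rule: finite_induct)
  case empty
  then show ?case by (simp add: lin_def)
next
  case (insert a A)
  have "lin G I f (\<lambda>i. \<Sum>s\<in>insert a A. d s * n s i) = lin G I f (\<lambda>i. d a * n a i + (\<Sum>s\<in>A. d s * n s i))"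
    using insert by simp
  also have "\<dots> = lin G I f (n a) [^] d a \<otimes> lin G I f (\<lambda>i. (\<Sum>s\<in>A. d s * n s i))"
    using assms(1) by (simp add: lin_add lin_smul)
  finally show ?case using insert assms(1) by simp
qed

lemma generate_insert_sub:
  assumes "subgroup K G" "g \<in> carrier G"
  shows "generate G (insert g K) \<subseteq> {k \<otimes> g [^] (p::int) | k p. k \<in> K}"
proof (rule generate_subgroup_incl)
  interpret K: subgroup K G by fact
  show "insert g K \<subseteq> {k \<otimes> g [^] (p::int) | k p. k \<in> K}"
  proof
    fix x assume "x \<in> insert g K"
    then show "x \<in> {k \<otimes> g [^] (p::int) | k p. k \<in> K}"
    proof
      assume "x = g" then show ?thesis using assms by (auto intro!: exI[of _ "\<one>"] exI[of _ "1::int"])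
    next
      assume "x \<in> K" then show ?thesis using assms by (auto intro!: exI[of _ x] exI[of _ "0::int"])
    qed
  qed
  show "subgroup {k \<otimes> g [^] (p::int) | k p. k \<in> K} G"
  proof
    show "{k \<otimes> g [^] (p::int) | k p. k \<in> K} \<subseteq> carrier G" using assms by auto
    show "\<one> \<in> {k \<otimes> g [^] (p::int) | k p. k \<in> K}" using assms by (auto intro!: exI[of _ "\<one>"] exI[of _ "0::int"])
  next
    fix x y assume "x \<in> {k \<otimes> g [^] (p::int) | k p. k \<in> K}" "y \<in> {k \<otimes> g [^] (p::int) | k p. k \<in> K}"
    then obtain k1 p1 k2 p2 where x: "x = k1 \<otimes> g [^] (p1::int)" "k1 \<in> K" and y: "y = k2 \<otimes> g [^] (p2::int)" "k2 \<in> K" by auto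
    have c: "k1 \<in> carrier G" "k2 \<in> carrier G" using x y by auto
    have "x \<otimes> y = (k1 \<otimes> k2) \<otimes> g [^] (p1 + p2)"
      using x y c assms by (simp add: int_pow_mult m_ac)
    then show "x \<otimes> y \<in> {k \<otimes> g [^] (p::int) | k p. k \<in> K}" using x y by auto
    have "inv x = inv k1 \<otimes> g [^] (- p1)"
      using x c assms by (simp add: int_pow_neg inv_mult_group m_comm)
    then show "inv x \<in> {k \<otimes> g [^] (p::int) | k p. k \<in> K}" using x by auto
  qed
qed


lemma pow_cancel_aux:
  assumes "k1 \<in> carrier G" "k2 \<in> carrier G" "g \<in> carrier G"
  shows "(k1 \<otimes> g [^] (p1::int)) [^] (p2::int) \<otimes> (k2 \<otimes> g [^] p2) [^] (- p1) = k1 [^] p2 \<otimes> k2 [^] (- p1)"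
proof -
  have "(k1 \<otimes> g [^] p1) [^] p2 \<otimes> (k2 \<otimes> g [^] p2) [^] (- p1)
      = (k1 [^] p2 \<otimes> g [^] (p1 * p2)) \<otimes> (k2 [^] (- p1) \<otimes> g [^] (- (p1 * p2)))"
    using assms by (simp add: int_pow_distrib int_pow_pow mult.commute)
  also have "\<dots> = (k1 [^] p2 \<otimes> k2 [^] (- p1)) \<otimes> (g [^] (p1 * p2) \<otimes> g [^] (- (p1 * p2)))"
    using assms by (simp add: m_ac)
  also have "g [^] (p1 * p2) \<otimes> g [^] (- (p1 * p2)) = \<one>"
    using assms by (simp flip: int_pow_mult)
  finally show ?thesis using assms by simp
qed


lemma indep_mod_subset:
  assumes "indep_mod G K I f" "J \<subseteq> I"
  shows "indep_mod G K J f"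
proof -
  have fI: "finite I" and fc: "f \<in> I \<rightarrow> carrier G" and ind: "\<And>n. lin G I f n \<in> K \<Longrightarrow> \<forall>i\<in>I. n i = 0"
    using assms(1) unfolding indep_mod_def by blast+
  have "lin G J f n \<in> K \<Longrightarrow> i \<in> J \<Longrightarrow> n i = 0" for n i
  proof -
    assume a: "lin G J f n \<in> K" "i \<in> J"
    let ?n = "\<lambda>j. if j \<in> J then n j else 0"
    have "lin G I f ?n = lin G J f ?n"
      using assms(2) fI fc by (intro lin_zero_outside) auto
    also have "\<dots> = lin G J f n" unfolding lin_def
      by (intro finprod_cong') (use assms(2) fc in \<open>auto simp: Pi_iff\<close>)
    finally have "lin G I f ?n \<in> K" using a by simp
    from ind[OF this] a assms(2) show "n i = 0" by (metis subsetD)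
  qed
  then show ?thesis unfolding indep_mod_def using fI fc assms(2) finite_subset by blast
qed

lemma indep_mod_nonzero:
  assumes "indep_mod G K I f" "i \<in> I" "subgroup K G"
  shows "f i \<notin> K"
proof
  assume a: "f i \<in> K"
  have fI: "finite I" and fc: "f \<in> I \<rightarrow> carrier G" using assms unfolding indep_mod_def by auto
  have "lin G I f (\<lambda>j. if j = i then 1 else 0) = f i"
    using lin_single[OF fI assms(2) fc, of 1] assms fc by (auto simp: Pi_iff)
  with a have "lin G I f (\<lambda>j. if j = i then 1 else 0) \<in> K" by simp
  then have "(\<lambda>j. if j = i then 1::int else 0) i = 0"
    using assms unfolding indep_mod_def by blast
  then show False by simp
qed


lemma generate_union_step:
  assumes "X0 \<subseteq> carrier G" "g \<in> carrier G" "subgroup K G"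
  shows "generate G (insert g X0 \<union> K) = generate G (X0 \<union> generate G (insert g K))"
proof (rule equalityI)
  have Ks: "K \<subseteq> carrier G" using assms(3) subgroup.subset by blast
  have A: "insert g K \<subseteq> generate G (insert g K)" by (auto intro: generate.incl)
  show "generate G (insert g X0 \<union> K) \<subseteq> generate G (X0 \<union> generate G (insert g K))"
    by (rule mono_generate) (use A in blast)
  have B: "generate G (insert g K) \<subseteq> generate G (insert g X0 \<union> K)" by (rule mono_generate) blast
  have C: "X0 \<subseteq> generate G (insert g X0 \<union> K)" by (auto intro: generate.incl)
  have D: "subgroup (generate G (insert g X0 \<union> K)) G"
    using assms(1,2) Ks by (intro generate_is_subgroup) blast
  show "generate G (X0 \<union> generate G (insert g K)) \<subseteq> generate G (insert g X0 \<union> K)"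
    by (rule generate_subgroup_incl[OF _ D]) (use B C in blast)
qed

lemma indep_bound:
  assumes "finite Xs" "Xs \<subseteq> carrier G" "subgroup K G" "indep_mod G K I f" "f ` I \<subseteq> generate G (Xs \<union> K)"
  shows "card I \<le> card Xs"
  using assms
proof (induct Xs arbitrary: K I f rule: finite_induct)
  case empty
  have "generate G K \<subseteq> K" using empty by (intro generate_subgroup_incl) auto
  then have "f ` I \<subseteq> K" using empty by auto
  then have "I = {}" using indep_mod_nonzero[OF empty(3) _ empty(2)] by blast
  then show ?case by simp
next
  case (insert g X0)
  have g: "g \<in> carrier G" and X0: "X0 \<subseteq> carrier G" using insert by auto
  have Ks: "K \<subseteq> carrier G" using insert subgroup.subset by blast
  define K' where "K' = generate G (insert g K)"
  have K': "subgroup K' G" unfolding K'_def using g Ks by (intro generate_is_subgroup) auto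
  have K'sub: "K' \<subseteq> {k \<otimes> g [^] (p::int) | k p. k \<in> K}" unfolding K'_def by (rule generate_insert_sub[OF insert(5) g])
  have fI: "finite I" and fc: "f \<in> I \<rightarrow> carrier G" and ind: "\<And>n. lin G I f n \<in> K \<Longrightarrow> \<forall>i\<in>I. n i = 0"
    using insert(6) unfolding indep_mod_def by blast+
  have fI': "f ` I \<subseteq> generate G (X0 \<union> K')"
    using insert(7) generate_union_step[OF X0 g insert(5)] unfolding K'_def by simp
  define F where "F = {J. J \<subseteq> I \<and> indep_mod G K' J f}"
  have "{} \<in> F" unfolding F_def indep_mod_def by auto
  moreover have "finite F" unfolding F_def using fI by auto
  ultimately obtain J where J: "J \<in> F" and Jmax: "\<And>J'. J' \<in> F \<Longrightarrow> card J' \<le> card J"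
  proof -
    have "Max (card ` F) \<in> card ` F" using \<open>{} \<in> F\<close> \<open>finite F\<close> by (intro Max_in) auto
    then obtain J where "J \<in> F" "card J = Max (card ` F)" by auto
    moreover have "\<And>J'. J' \<in> F \<Longrightarrow> card J' \<le> Max (card ` F)" using \<open>finite F\<close> by auto
    ultimately show ?thesis using that by metis
  qed
  have JI: "J \<subseteq> I" and Jind: "indep_mod G K' J f" using J unfolding F_def by auto
  have IH: "card J \<le> card X0"
    using insert(3)[OF X0 K' Jind] fI' JI by blast
  have key: "\<exists>N. (\<forall>j. j \<notin> insert i J \<longrightarrow> N j = 0) \<and> N i \<noteq> 0 \<and> lin G I f N \<in> K'" if i: "i \<in> I - J" for i
  proof -
    have "insert i J \<notin> F"
    proof
      assume "insert i J \<in> F"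
      from Jmax[OF this] have "card (insert i J) \<le> card J" .
      moreover have "finite J" using fI JI finite_subset by blast
      ultimately show False using i by simp
    qed
    then have "\<not> indep_mod G K' (insert i J) f" unfolding F_def using i JI by auto
    moreover have "finite (insert i J)" "f \<in> insert i J \<rightarrow> carrier G" using fI JI fc i finite_subset by auto
    ultimately obtain n where n: "lin G (insert i J) f n \<in> K'" and nz: "\<exists>j\<in>insert i J. n j \<noteq> 0"
      unfolding indep_mod_def by blast
    define N where "N = (\<lambda>j. if j \<in> insert i J then n j else 0)"
    have fc': "f \<in> insert i J \<rightarrow> carrier G" using fc i JI by auto
    have finJ: "finite (insert i J)" using fI JI i finite_subset by auto
    have "lin G I f N = lin G (insert i J) f N"
      using fI JI i fc by (intro lin_zero_outside) (auto simp: N_def)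
    also have "\<dots> = lin G (insert i J) f n" unfolding lin_def N_def
      by (intro finprod_cong') (use fc' in \<open>auto simp: Pi_iff\<close>)
    finally have linN: "lin G I f N = lin G (insert i J) f n" .
    have "n i \<noteq> 0"
    proof
      assume ni: "n i = 0"
      have "lin G (insert i J) f n = lin G J f n"
        using finJ fc' ni by (intro lin_zero_outside) auto
      with n have "lin G J f n \<in> K'" by simp
      with Jind have "\<forall>j\<in>J. n j = 0" unfolding indep_mod_def by blast
      with nz ni show False by auto
    qed
    then show ?thesis using n linN by (intro exI[of _ N]) (auto simp: N_def)
  qed
  have "\<forall>a\<in>I - J. \<forall>b\<in>I - J. a = b"
  proof (intro ballI, rule ccontr)
    fix a b assume a: "a \<in> I - J" and b: "b \<in> I - J" and ab: "a \<noteq> b"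
    obtain Na where Na: "\<And>j. j \<notin> insert a J \<Longrightarrow> Na j = 0" "Na a \<noteq> 0" "lin G I f Na \<in> K'" using key[OF a] by blast
    obtain Nb where Nb: "\<And>j. j \<notin> insert b J \<Longrightarrow> Nb j = 0" "Nb b \<noteq> 0" "lin G I f Nb \<in> K'" using key[OF b] by blast
    obtain ka pa where ka: "ka \<in> K" "lin G I f Na = ka \<otimes> g [^] (pa::int)" using Na(3) K'sub by blast
    obtain kb pb where kb: "kb \<in> K" "lin G I f Nb = kb \<otimes> g [^] (pb::int)" using Nb(3) K'sub by blast
    have kac: "ka \<in> carrier G" "kb \<in> carrier G" using ka kb Ks by auto
    show False
    proof (cases "pb = 0")
      case True
      then have "lin G I f Nb \<in> K" using kb kac by simp
      with ind b Nb(2) show False by auto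
    next
      case False
      define m where "m = (\<lambda>j. pb * Na j + (- pa) * Nb j)"
      have "lin G I f m = lin G I f (\<lambda>j. pb * Na j) \<otimes> lin G I f (\<lambda>j. (- pa) * Nb j)"
        unfolding m_def using fc by (rule lin_add)
      also have "\<dots> = (lin G I f Na) [^] pb \<otimes> (lin G I f Nb) [^] (- pa)"
        using fc lin_smul[of f I pb Na] lin_smul[of f I "- pa" Nb] by simp
      also have "\<dots> = ka [^] pb \<otimes> kb [^] (- pa)"
        using ka kb kac g pow_cancel_aux by simp
      finally have "lin G I f m \<in> K"
        using ka kb insert(5) by (simp add: subgroup.m_closed subgroup_int_pow_closed)
      with ind a have "m a = 0" by auto
      moreover have "Nb a = 0" using Nb(1) ab a by auto
      ultimately show False using False Na(2) by (simp add: m_def)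
    qed
  qed
  then have "card (I - J) \<le> 1" using fI by (simp add: card_le_Suc0_iff_eq)
  moreover have "card I = card J + card (I - J)"
    using fI JI by (metis card_Diff_subset card_mono finite_subset le_add_diff_inverse)
  ultimately show ?case using IH insert(1,2) by simp
qed



lemma lin_in_subgroup:
  assumes "subgroup H G" "f ` I \<subseteq> H"
  shows "lin G I f n \<in> H"
proof (cases "finite I")
  case True
  then show ?thesis using assms(2) unfolding lin_def
  proof (induct I rule: finite_induct)
    case empty then show ?case using assms(1) by (simp add: subgroup.one_closed)
  next
    case (insert a A)
    have c: "f a \<in> carrier G" "f \<in> A \<rightarrow> carrier G" using insert assms(1) subgroup.subset by fastforce+
    have "(\<Otimes>i\<in>insert a A. f i [^] n i) = f a [^] n a \<otimes> (\<Otimes>i\<in>A. f i [^] n i)"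
      using insert c by (intro finprod_insert) (auto simp: Pi_iff)
    moreover have "f a [^] n a \<in> H" using insert assms(1) by (simp add: subgroup_int_pow_closed)
    ultimately show ?case using insert assms(1) by (simp add: subgroup.m_closed)
  qed
next
  case False
  then show ?thesis using assms(1) by (simp add: lin_def subgroup.one_closed)
qed

lemma fam_to_set:
  assumes "indep_mod G K0 I f" "subgroup K0 G"
  shows "inj_on f I" "indep_mod G K0 (f ` I) id"
proof -
  have fI: "finite I" and fc: "f \<in> I \<rightarrow> carrier G" and ind: "\<And>n. lin G I f n \<in> K0 \<Longrightarrow> \<forall>i\<in>I. n i = 0"
    using assms(1) unfolding indep_mod_def by blast+
  show inj: "inj_on f I"
  proof (rule inj_onI, rule ccontr)
    fix a b assume a: "a \<in> I" and b: "b \<in> I" and e: "f a = f b" and ab: "a \<noteq> b"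
    define n where "n = (\<lambda>j. (if j = a then 1 else 0) + (if j = b then -1 else (0::int)))"
    have "lin G I f n = lin G I f (\<lambda>j. if j = a then 1 else 0) \<otimes> lin G I f (\<lambda>j. if j = b then -1 else 0)"
      unfolding n_def using fc by (rule lin_add)
    also have "\<dots> = f a \<otimes> inv (f b)"
      using lin_single[OF fI a fc, of 1] lin_single[OF fI b fc, of "-1"] fc a b by (simp add: Pi_iff int_pow_neg)
    also have "\<dots> = \<one>" using e fc b by (simp add: Pi_iff)
    finally have "lin G I f n \<in> K0" using assms(2) by (simp add: subgroup.one_closed)
    with ind a have "n a = 0" by blast
    then show False using ab by (simp add: n_def)
  qed
  show "indep_mod G K0 (f ` I) id"
    unfolding indep_mod_def
  proof (intro conjI allI impI ballI)
    show "finite (f ` I)" using fI by simp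
    show "id \<in> f ` I \<rightarrow> carrier G" using fc by auto
    fix n y assume h: "lin G (f ` I) id n \<in> K0" and y: "y \<in> f ` I"
    have "lin G (f ` I) id n = lin G I f (\<lambda>i. n (f i))"
      unfolding lin_def using fc inj by (subst finprod_reindex) (auto simp: Pi_iff)
    with h ind have "\<forall>i\<in>I. n (f i) = 0" by simp
    with y show "n y = 0" by auto
  qed
qed

lemma rkm_props:
  assumes "finite Xs" "Xs \<subseteq> carrier G" "subgroup K G" "H \<subseteq> generate G (Xs \<union> K)"
  shows "\<And>S. S \<subseteq> H \<Longrightarrow> indep_mod G K S id \<Longrightarrow> card S \<le> rkm G K H"
    and "\<exists>S. S \<subseteq> H \<and> indep_mod G K S id \<and> card S = rkm G K H"
    and "rkm G K H \<le> card Xs"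
proof -
  let ?C = "{card S | S. S \<subseteq> H \<and> indep_mod G K S id}"
  have bd: "\<And>S. S \<subseteq> H \<Longrightarrow> indep_mod G K S id \<Longrightarrow> card S \<le> card Xs"
  proof -
    fix S assume "S \<subseteq> H" "indep_mod G K S id"
    then show "card S \<le> card Xs" using indep_bound[OF assms(1-3), of S id] assms(4) by auto
  qed
  have "?C \<subseteq> {..card Xs}" using bd by auto
  then have fin: "finite ?C" using finite_subset by blast
  have "indep_mod G K {} id" unfolding indep_mod_def by auto
  then have "card {} \<in> ?C" by (intro CollectI exI[of _ "{}"]) auto
  then have ne: "?C \<noteq> {}" by blast
  have eq: "rkm G K H = Max ?C" unfolding rkm_def using fin ne by (rule cSup_eq_Max)
  show "\<And>S. S \<subseteq> H \<Longrightarrow> indep_mod G K S id \<Longrightarrow> card S \<le> rkm G K H"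
    unfolding eq using fin by (intro Max_ge) auto
  have "Max ?C \<in> ?C" using fin ne by (rule Max_in)
  then show "\<exists>S. S \<subseteq> H \<and> indep_mod G K S id \<and> card S = rkm G K H" unfolding eq by auto
  then show "rkm G K H \<le> card Xs" using bd by metis
qed

lemma key_rel:
  assumes fI: "finite I" and fc: "f \<in> I \<rightarrow> carrier G" and JI: "J \<subseteq> I" and i: "i \<in> I - J"
    and Jind: "indep_mod G K J f" and nind: "\<not> indep_mod G K (insert i J) f"
  shows "\<exists>N. (\<forall>j. j \<notin> insert i J \<longrightarrow> N j = 0) \<and> N i \<noteq> 0 \<and> lin G I f N \<in> K"
proof -
  have "finite (insert i J)" "f \<in> insert i J \<rightarrow> carrier G" using fI JI fc i finite_subset by auto
  then obtain n where n: "lin G (insert i J) f n \<in> K" and nz: "\<exists>j\<in>insert i J. n j \<noteq> 0"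
    using nind unfolding indep_mod_def by blast
  define N where "N = (\<lambda>j. if j \<in> insert i J then n j else 0)"
  have fc': "f \<in> insert i J \<rightarrow> carrier G" using fc i JI by auto
  have finJ: "finite (insert i J)" using fI JI i finite_subset by auto
  have "lin G I f N = lin G (insert i J) f N"
    using fI JI i fc by (intro lin_zero_outside) (auto simp: N_def)
  also have "\<dots> = lin G (insert i J) f n" unfolding lin_def N_def
    by (intro finprod_cong') (use fc' in \<open>auto simp: Pi_iff\<close>)
  finally have linN: "lin G I f N = lin G (insert i J) f n" .
  have "n i \<noteq> 0"
  proof
    assume ni: "n i = 0"
    have "lin G (insert i J) f n = lin G J f n"
      using finJ fc' ni by (intro lin_zero_outside) auto
    with n have "lin G J f n \<in> K" by simp
    with Jind have "\<forall>j\<in>J. n j = 0" unfolding indep_mod_def by blast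
    with nz ni show False by auto
  qed
  then show ?thesis using n linN by (intro exI[of _ N]) (auto simp: N_def)
qed

lemma exists_maximal_indep:
  assumes "finite S" and fc: "f \<in> S \<rightarrow> carrier G"
  obtains J where "J \<subseteq> S" "indep_mod G K J f" "\<And>J'. J' \<subseteq> S \<Longrightarrow> indep_mod G K J' f \<Longrightarrow> card J' \<le> card J"
proof -
  define F where "F = {J. J \<subseteq> S \<and> indep_mod G K J f}"
  have "{} \<in> F" unfolding F_def indep_mod_def by auto
  moreover have "finite F" unfolding F_def using assms by auto
  ultimately have "Max (card ` F) \<in> card ` F" by (intro Max_in) auto
  then obtain J where "J \<in> F" "card J = Max (card ` F)" by auto
  moreover have "\<And>J'. J' \<in> F \<Longrightarrow> card J' \<le> Max (card ` F)" using \<open>finite F\<close> by auto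
  ultimately show ?thesis using that fc unfolding F_def by auto
qed


lemma rkm_mono:
  assumes "finite Xs" "Xs \<subseteq> carrier G" "subgroup K G" "H' \<subseteq> generate G (Xs \<union> K)" "H \<subseteq> H'"
  shows "rkm G K H \<le> rkm G K H'"
proof -
  obtain S where "S \<subseteq> H" "indep_mod G K S id" "card S = rkm G K H"
    using rkm_props(2)[OF assms(1-3)] assms(4,5) by blast
  then show ?thesis using rkm_props(1)[OF assms(1-4)] assms(5) by (metis order_trans)
qed

lemma rkm_add:
  assumes Xs: "finite Xs" "Xs \<subseteq> carrier G" and K0: "subgroup K0 G" and K: "subgroup K G"
    and sub: "K0 \<subseteq> K" "K \<subseteq> H" and Hb: "H \<subseteq> generate G (Xs \<union> K0)"
  shows "rkm G K0 H = rkm G K H + rkm G K0 K"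
proof -
  have K0s: "K0 \<subseteq> carrier G" using K0 subgroup.subset by blast
  have Ks: "K \<subseteq> carrier G" using K subgroup.subset by blast
  have Hb': "H \<subseteq> generate G (Xs \<union> K)" using Hb sub(1) mono_generate[of "Xs \<union> K0" "Xs \<union> K"] by blast
  have Kb: "K \<subseteq> generate G (Xs \<union> K0)" using Hb sub by blast
  have Hc: "H \<subseteq> carrier G" using Hb generate_incl[of "Xs \<union> K0"] Xs K0s by blast
  show ?thesis
  proof (rule antisym)
    obtain S where S: "S \<subseteq> H" "indep_mod G K0 S id" "card S = rkm G K0 H"
      using rkm_props(2)[OF Xs K0 Hb] by blast
    have fS: "finite S" and Sc: "id \<in> S \<rightarrow> carrier G" and indS: "\<And>n. lin G S id n \<in> K0 \<Longrightarrow> \<forall>i\<in>S. n i = 0"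
      using S(2) unfolding indep_mod_def by blast+
    obtain J where JS: "J \<subseteq> S" and Jind: "indep_mod G K J id"
      and Jmax: "\<And>J'. J' \<subseteq> S \<Longrightarrow> indep_mod G K J' id \<Longrightarrow> card J' \<le> card J"
      using exists_maximal_indep[OF fS Sc] by metis
    have cJ: "card J \<le> rkm G K H" using rkm_props(1)[OF Xs K Hb'] JS S(1) Jind by auto
    have "\<forall>s\<in>S - J. \<exists>N. (\<forall>j. j \<notin> insert s J \<longrightarrow> N j = 0) \<and> N s \<noteq> 0 \<and> lin G S id N \<in> K"
    proof
      fix s assume s: "s \<in> S - J"
      have "\<not> indep_mod G K (insert s J) id"
      proof
        assume "indep_mod G K (insert s J) id"
        from Jmax[OF _ this] s JS have "card (insert s J) \<le> card J" by auto
        moreover have "finite J" using fS JS finite_subset by blast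
        ultimately show False using s by simp
      qed
      then show "\<exists>N. (\<forall>j. j \<notin> insert s J \<longrightarrow> N j = 0) \<and> N s \<noteq> 0 \<and> lin G S id N \<in> K"
        by (intro key_rel[OF fS Sc JS s Jind])
    qed
    then obtain N where N: "\<And>s. s \<in> S - J \<Longrightarrow> (\<forall>j. j \<notin> insert s J \<longrightarrow> N s j = 0) \<and> N s s \<noteq> 0 \<and> lin G S id (N s) \<in> K"
      by metis
    define k where "k = (\<lambda>s. lin G S id (N s))"
    have kK: "k ` (S - J) \<subseteq> K" using N unfolding k_def by auto
    have kind: "indep_mod G K0 (S - J) k"
      unfolding indep_mod_def
    proof (intro conjI allI impI ballI)
      show "finite (S - J)" using fS by simp
      show "k \<in> S - J \<rightarrow> carrier G" using kK Ks by auto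
      fix d t assume h: "lin G (S - J) k d \<in> K0" and t: "t \<in> S - J"
      have "lin G (S - J) k d = finprod G (\<lambda>s. lin G S id (N s) [^] d s) (S - J)"
        unfolding lin_def k_def by simp
      also have "\<dots> = lin G S id (\<lambda>i. \<Sum>s\<in>S - J. d s * N s i)"
        using Sc fS by (simp add: lin_sum)
      finally have "\<forall>i\<in>S. (\<Sum>s\<in>S - J. d s * N s i) = 0" using h indS by simp
      then have "(\<Sum>s\<in>S - J. d s * N s t) = 0" using t by auto
      moreover have "(\<Sum>s\<in>S - J. d s * N s t) = d t * N t t"
      proof -
        have "(\<Sum>s\<in>S - J. d s * N s t) = d t * N t t + (\<Sum>s\<in>S - J - {t}. d s * N s t)"
          using t fS by (simp add: sum.remove)
        also have "(\<Sum>s\<in>S - J - {t}. d s * N s t) = 0"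
          using N t by (intro sum.neutral) auto
        finally show ?thesis by simp
      qed
      ultimately show "d t = 0" using N[OF t] by simp
    qed
    have "card (S - J) \<le> rkm G K0 K"
    proof -
      have "inj_on k (S - J)" "indep_mod G K0 (k ` (S - J)) id" using fam_to_set[OF kind K0] by auto
      moreover have "K \<subseteq> generate G (Xs \<union> K0)" by (rule Kb)
      ultimately show ?thesis using rkm_props(1)[OF Xs K0 Kb, of "k ` (S - J)"] kK
        by (simp add: card_image)
    qed
    moreover have "card S = card J + card (S - J)"
      using fS JS by (metis card_Diff_subset card_mono finite_subset le_add_diff_inverse)
    ultimately show "rkm G K0 H \<le> rkm G K H + rkm G K0 K" using cJ S(3) by linarith
  next
    obtain S1 where S1: "S1 \<subseteq> K" "indep_mod G K0 S1 id" "card S1 = rkm G K0 K"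
      using rkm_props(2)[OF Xs K0 Kb] by blast
    obtain S2 where S2: "S2 \<subseteq> H" "indep_mod G K S2 id" "card S2 = rkm G K H"
      using rkm_props(2)[OF Xs K Hb'] by blast
    have f1: "finite S1" and f2: "finite S2" using S1 S2 unfolding indep_mod_def by auto
    have disj: "S1 \<inter> S2 = {}" using indep_mod_nonzero[OF S2(2) _ K] S1(1) by auto
    have c1: "S1 \<subseteq> carrier G" and c2: "S2 \<subseteq> carrier G" using S1(1) S2(1) Ks Hc by auto
    have ind: "indep_mod G K0 (S1 \<union> S2) id"
      unfolding indep_mod_def
    proof (intro conjI allI impI)
      show "finite (S1 \<union> S2)" using f1 f2 by simp
      show "id \<in> S1 \<union> S2 \<rightarrow> carrier G" using c1 c2 by auto
      fix n assume h: "lin G (S1 \<union> S2) id n \<in> K0"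
      have spl: "lin G (S1 \<union> S2) id n = lin G S1 id n \<otimes> lin G S2 id n"
        unfolding lin_def using f1 f2 disj c1 c2 by (intro finprod_Un_disjoint) (auto simp: Pi_iff)
      have l1: "lin G S1 id n \<in> K" using lin_in_subgroup[OF K, of id S1] S1(1) by auto
      have l1c: "lin G S1 id n \<in> carrier G" and l2c: "lin G S2 id n \<in> carrier G" using c1 c2 by (auto intro!: lin_closed)
      have "lin G S2 id n = inv (lin G S1 id n) \<otimes> lin G (S1 \<union> S2) id n"
        using spl l1c l2c by (simp add: m_assoc[symmetric])
      moreover have "lin G (S1 \<union> S2) id n \<in> K" using h sub(1) by auto
      ultimately have "lin G S2 id n \<in> K" using l1 K by (simp add: subgroup.m_closed subgroup.m_inv_closed)
      then have z2: "\<forall>i\<in>S2. n i = 0" using S2(2) unfolding indep_mod_def by blast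
      have "lin G S2 id n = \<one>" unfolding lin_def using z2 by (intro finprod_one_eqI) simp
      then have "lin G S1 id n \<in> K0" using spl h l1c by simp
      then have z1: "\<forall>i\<in>S1. n i = 0" using S1(2) unfolding indep_mod_def by blast
      show "\<forall>i\<in>S1 \<union> S2. n i = 0" using z1 z2 by blast
    qed
    have "S1 \<union> S2 \<subseteq> H" using S1(1) S2(1) sub by auto
    then have "card (S1 \<union> S2) \<le> rkm G K0 H" using rkm_props(1)[OF Xs K0 Hb] ind by auto
    moreover have "card (S1 \<union> S2) = card S1 + card S2" using f1 f2 disj by (simp add: card_Un_disjoint)
    ultimately show "rkm G K H + rkm G K0 K \<le> rkm G K0 H" using S1 S2 by linarith
  qed
qed

end

lemma hom_finprod_gen:
  assumes G: "comm_group G" and Q: "comm_group Q" and h: "h \<in> hom G Q" and f: "f \<in> I \<rightarrow> carrier G"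
  shows "h (finprod G f I) = finprod Q (\<lambda>i. h (f i)) I"
proof -
  interpret G: comm_group G by fact
  interpret Q: comm_group Q by fact
  have h1: "h \<one>\<^bsub>G\<^esub> = \<one>\<^bsub>Q\<^esub>" using hom_one[OF h G.is_group Q.is_group] .
  have hc: "\<And>x. x \<in> carrier G \<Longrightarrow> h x \<in> carrier Q" using h by (auto simp: hom_def)
  show ?thesis
  proof (cases "finite I")
    case True
    then show ?thesis using f
    proof (induct I rule: finite_induct)
      case empty
      then show ?case using h1 by simp
    next
      case (insert a A)
      have fA: "f \<in> A \<rightarrow> carrier G" and fa: "f a \<in> carrier G" using insert by auto
      have "finprod G f (insert a A) = f a \<otimes>\<^bsub>G\<^esub> finprod G f A"
        using insert fA fa by (intro G.finprod_insert) auto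
      moreover have "finprod Q (\<lambda>i. h (f i)) (insert a A) = h (f a) \<otimes>\<^bsub>Q\<^esub> finprod Q (\<lambda>i. h (f i)) A"
        using insert fA fa hc by (intro Q.finprod_insert) (auto simp: Pi_iff)
      moreover have "finprod G f A \<in> carrier G" using fA by simp
      ultimately show ?case using insert(3) fA fa hom_mult[OF h] by simp
    qed
  next
    case False
    then show ?thesis using h1 by simp
  qed
qed

lemma hom_lin:
  assumes G: "comm_group G" and Q: "comm_group Q" and h: "h \<in> hom G Q" and f: "f \<in> I \<rightarrow> carrier G"
  shows "h (lin G I f n) = lin Q I (\<lambda>i. h (f i)) n"
proof -
  interpret G: comm_group G by fact
  interpret Q: comm_group Q by fact
  have hc: "\<And>x. x \<in> carrier G \<Longrightarrow> h x \<in> carrier Q" using h by (auto simp: hom_def)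
  have "h (lin G I f n) = finprod Q (\<lambda>i. h (f i [^]\<^bsub>G\<^esub> n i)) I"
    unfolding lin_def using f by (intro hom_finprod_gen[OF G Q h]) (auto simp: Pi_iff)
  also have "\<dots> = lin Q I (\<lambda>i. h (f i)) n"
    unfolding lin_def
  proof (rule Q.finprod_cong')
    show "(\<lambda>i. h (f i) [^]\<^bsub>Q\<^esub> n i) \<in> I \<rightarrow> carrier Q" using f hc by (auto simp: Pi_iff)
    fix i assume "i \<in> I"
    then show "h (f i [^]\<^bsub>G\<^esub> n i) = h (f i) [^]\<^bsub>Q\<^esub> n i"
      using f hom_int_pow[OF h _ G.is_group Q.is_group] by auto
  qed simp
  finally show ?thesis .
qed

lemma z_indep_iff:
  assumes "comm_group G"
  shows "z_indep G S \<longleftrightarrow> indep_mod G {\<one>\<^bsub>G\<^esub>} S id"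
  unfolding z_indep_def indep_mod_def lin_def by (auto simp: Pi_iff)

lemma grank_rkm:
  assumes "comm_group G"
  shows "grank G H = rkm G {\<one>\<^bsub>G\<^esub>} H"
  unfolding grank_def rkm_def using z_indep_iff[OF assms] by simp


lemma grank_quot:
  assumes G: "comm_group G" and K: "subgroup K G" and H: "H \<subseteq> carrier G"
  shows "grank (G Mod K) ((\<lambda>h. K #>\<^bsub>G\<^esub> h) ` H) = rkm G K H"
proof -
  interpret G: comm_group G by fact
  have Qc: "comm_group (G Mod K)" by (rule G.abelian_FactGroup[OF K])
  interpret Q: comm_group "G Mod K" by (rule Qc)
  have nK: "K \<lhd> G" using G.subgroup_imp_normal[OF K] .
  have pih: "(\<lambda>a. K #>\<^bsub>G\<^esub> a) \<in> hom G (G Mod K)" using normal.r_coset_hom_Mod[OF nK] .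
  have one: "\<one>\<^bsub>G Mod K\<^esub> = K" by simp
  have Ks: "K \<subseteq> carrier G" using K subgroup.subset by blast
  let ?pi = "\<lambda>a. K #>\<^bsub>G\<^esub> a"
  have picar: "\<And>a. a \<in> carrier G \<Longrightarrow> ?pi a \<in> carrier (G Mod K)" using pih by (auto simp: hom_def)
  have ker: "\<And>x. x \<in> carrier G \<Longrightarrow> ?pi x = K \<Longrightarrow> x \<in> K"
    using G.coset_join1 K by blast
  have "{card T | T. T \<subseteq> ?pi ` H \<and> z_indep (G Mod K) T} = {card S | S. S \<subseteq> H \<and> indep_mod G K S id}"
  proof (intro equalityI subsetI)
    fix c assume "c \<in> {card T | T. T \<subseteq> ?pi ` H \<and> z_indep (G Mod K) T}"
    then obtain T where T: "c = card T" "T \<subseteq> ?pi ` H" "z_indep (G Mod K) T" by blast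
    define L where "L = (\<lambda>t. SOME h. h \<in> H \<and> ?pi h = t)"
    have L: "\<And>t. t \<in> T \<Longrightarrow> L t \<in> H \<and> ?pi (L t) = t"
    proof -
      fix t assume "t \<in> T"
      then have "\<exists>h. h \<in> H \<and> ?pi h = t" using T(2) by auto
      then show "L t \<in> H \<and> ?pi (L t) = t" unfolding L_def by (rule someI_ex)
    qed
    have fT: "finite T" using T(3) unfolding z_indep_def by blast
    have Lc: "L \<in> T \<rightarrow> carrier G" using L H by auto
    have ind: "indep_mod G K T L"
      unfolding indep_mod_def
    proof (intro conjI allI impI)
      show "finite T" by (rule fT)
      show "L \<in> T \<rightarrow> carrier G" by (rule Lc)
      fix n assume h: "lin G T L n \<in> K"
      have "?pi (lin G T L n) = K" using h G.coset_join2 K Ks by (meson subsetD)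
      moreover have "?pi (lin G T L n) = lin (G Mod K) T (\<lambda>t. ?pi (L t)) n"
        by (rule hom_lin[OF G Qc pih Lc])
      moreover have "lin (G Mod K) T (\<lambda>t. ?pi (L t)) n = lin (G Mod K) T id n"
      proof -
        have Tc: "T \<subseteq> carrier (G Mod K)" using T(2) picar H by auto
        show ?thesis unfolding lin_def using L Tc by (intro Q.finprod_cong') (auto simp: Pi_iff)
      qed
      ultimately have "lin (G Mod K) T id n = \<one>\<^bsub>G Mod K\<^esub>" by simp
      then show "\<forall>i\<in>T. n i = 0" using T(3) unfolding z_indep_def lin_def by auto
    qed
    have "inj_on L T" "indep_mod G K (L ` T) id" using G.fam_to_set[OF ind K] by auto
    moreover have "L ` T \<subseteq> H" using L by auto
    ultimately show "c \<in> {card S | S. S \<subseteq> H \<and> indep_mod G K S id}"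
      using T(1) by (auto simp: card_image intro!: exI[of _ "L ` T"])
  next
    fix c assume "c \<in> {card S | S. S \<subseteq> H \<and> indep_mod G K S id}"
    then obtain S where S: "c = card S" "S \<subseteq> H" "indep_mod G K S id" by blast
    have fS: "finite S" using S(3) unfolding indep_mod_def by blast
    have Sc: "id \<in> S \<rightarrow> carrier G" using S H by auto
    have ind: "indep_mod (G Mod K) {\<one>\<^bsub>G Mod K\<^esub>} S ?pi"
      unfolding indep_mod_def
    proof (intro conjI allI impI)
      show "finite S" by (rule fS)
      show "?pi \<in> S \<rightarrow> carrier (G Mod K)" using picar S H by auto
      fix n assume h: "lin (G Mod K) S ?pi n \<in> {\<one>\<^bsub>G Mod K\<^esub>}"
      have "?pi (lin G S id n) = lin (G Mod K) S (\<lambda>i. ?pi (id i)) n"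
        by (rule hom_lin[OF G Qc pih Sc])
      with h have "?pi (lin G S id n) = K" by simp
      moreover have "lin G S id n \<in> carrier G" using Sc by (rule G.lin_closed)
      ultimately have "lin G S id n \<in> K" using ker by blast
      then show "\<forall>i\<in>S. n i = 0" using S(3) unfolding indep_mod_def by blast
    qed
    have "inj_on ?pi S" "indep_mod (G Mod K) {\<one>\<^bsub>G Mod K\<^esub>} (?pi ` S) id"
      using Q.fam_to_set[OF ind Q.triv_subgroup] by auto
    then show "c \<in> {card T | T. T \<subseteq> ?pi ` H \<and> z_indep (G Mod K) T}"
      using S z_indep_iff[OF Qc] by (auto simp: card_image intro!: exI[of _ "?pi ` S"])
  qed
  then show ?thesis unfolding grank_def rkm_def by simp
qed



lemma num_hom_cong:
  fixes T :: "('a,'b) monoid_scheme" and T' :: "('c,'d) monoid_scheme" and G :: "('e,'f) monoid_scheme"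
    and \<phi> :: "'a \<Rightarrow> 'c"
  assumes bij: "bij_betw \<phi> (carrier T) (carrier T')"
    and hm: "\<And>x y. x \<in> carrier T \<Longrightarrow> y \<in> carrier T \<Longrightarrow> \<phi> (x \<otimes>\<^bsub>T\<^esub> y) = \<phi> x \<otimes>\<^bsub>T'\<^esub> \<phi> y"
    and cl: "\<And>x y. x \<in> carrier T \<Longrightarrow> y \<in> carrier T \<Longrightarrow> x \<otimes>\<^bsub>T\<^esub> y \<in> carrier T"
    and cl': "\<And>x y. x \<in> carrier T' \<Longrightarrow> y \<in> carrier T' \<Longrightarrow> x \<otimes>\<^bsub>T'\<^esub> y \<in> carrier T'"
  shows "num_hom T G = num_hom T' G"
proof -
  define \<psi> where "\<psi> = inv_into (carrier T) \<phi>"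
  have \<psi>1: "\<And>x. x \<in> carrier T \<Longrightarrow> \<psi> (\<phi> x) = x" unfolding \<psi>_def using bij bij_betw_inv_into_left by fast
  have \<psi>2: "\<And>x. x \<in> carrier T' \<Longrightarrow> \<phi> (\<psi> x) = x" unfolding \<psi>_def using bij bij_betw_inv_into_right by fast
  have \<psi>c: "\<And>x. x \<in> carrier T' \<Longrightarrow> \<psi> x \<in> carrier T" unfolding \<psi>_def using bij
    by (metis bij_betw_def inv_into_into)
  have \<phi>c: "\<And>x. x \<in> carrier T \<Longrightarrow> \<phi> x \<in> carrier T'" using bij bij_betw_apply by fast
  have hm': "\<And>x y. x \<in> carrier T' \<Longrightarrow> y \<in> carrier T' \<Longrightarrow> \<psi> (x \<otimes>\<^bsub>T'\<^esub> y) = \<psi> x \<otimes>\<^bsub>T\<^esub> \<psi> y"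
  proof -
    fix x y assume xy: "x \<in> carrier T'" "y \<in> carrier T'"
    have "\<phi> (\<psi> x \<otimes>\<^bsub>T\<^esub> \<psi> y) = x \<otimes>\<^bsub>T'\<^esub> y" using hm[OF \<psi>c \<psi>c] xy \<psi>2 by simp
    then have "\<psi> (x \<otimes>\<^bsub>T'\<^esub> y) = \<psi> (\<phi> (\<psi> x \<otimes>\<^bsub>T\<^esub> \<psi> y))" by simp
    also have "\<dots> = \<psi> x \<otimes>\<^bsub>T\<^esub> \<psi> y" using \<psi>1 cl \<psi>c xy by simp
    finally show "\<psi> (x \<otimes>\<^bsub>T'\<^esub> y) = \<psi> x \<otimes>\<^bsub>T\<^esub> \<psi> y" .
  qed
  define F where "F = (\<lambda>h'::'c \<Rightarrow> 'e. restrict (\<lambda>x. h' (\<phi> x)) (carrier T))"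
  define B where "B = (\<lambda>h::'a \<Rightarrow> 'e. restrict (\<lambda>x. h (\<psi> x)) (carrier T'))"
  have "bij_betw F (hom T' G \<inter> extensional (carrier T')) (hom T G \<inter> extensional (carrier T))"
  proof (rule bij_betw_byWitness[where f' = B])
    show "\<forall>a\<in>hom T' G \<inter> extensional (carrier T'). B (F a) = a"
      unfolding F_def B_def using \<psi>2 \<psi>c by (auto simp: extensional_def fun_eq_iff)
    show "\<forall>a\<in>hom T G \<inter> extensional (carrier T). F (B a) = a"
      unfolding F_def B_def using \<psi>1 \<phi>c by (auto simp: extensional_def fun_eq_iff)
    show "F ` (hom T' G \<inter> extensional (carrier T')) \<subseteq> hom T G \<inter> extensional (carrier T)"
      unfolding F_def using \<phi>c hm cl by (auto simp: hom_def Pi_iff)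
    show "B ` (hom T G \<inter> extensional (carrier T)) \<subseteq> hom T' G \<inter> extensional (carrier T')"
      unfolding B_def using \<psi>c hm' cl' by (auto simp: hom_def Pi_iff)
  qed
  then show ?thesis unfolding num_hom_def by (metis bij_betw_same_card)
qed

lemma num_hom_DirProd:
  fixes T :: "('a,'b) monoid_scheme" and G1 :: "('c,'d) monoid_scheme" and G2 :: "('e,'f) monoid_scheme"
  assumes cl: "\<And>x y. x \<in> carrier T \<Longrightarrow> y \<in> carrier T \<Longrightarrow> x \<otimes>\<^bsub>T\<^esub> y \<in> carrier T"
  shows "num_hom T (G1 \<times>\<times> G2) = num_hom T G1 * num_hom T G2"
proof -
  define F where "F = (\<lambda>h::'a \<Rightarrow> 'c \<times> 'e. (restrict (\<lambda>x. fst (h x)) (carrier T), restrict (\<lambda>x. snd (h x)) (carrier T)))"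
  define B where "B = (\<lambda>(h1::'a \<Rightarrow> 'c, h2::'a \<Rightarrow> 'e). restrict (\<lambda>x. (h1 x, h2 x)) (carrier T))"
  have "bij_betw F (hom T (G1 \<times>\<times> G2) \<inter> extensional (carrier T))
     ((hom T G1 \<inter> extensional (carrier T)) \<times> (hom T G2 \<inter> extensional (carrier T)))"
  proof (rule bij_betw_byWitness[where f' = B])
    show "\<forall>a\<in>hom T (G1 \<times>\<times> G2) \<inter> extensional (carrier T). B (F a) = a"
      unfolding F_def B_def by (auto simp: extensional_def fun_eq_iff)
    show "\<forall>a\<in>(hom T G1 \<inter> extensional (carrier T)) \<times> (hom T G2 \<inter> extensional (carrier T)). F (B a) = a"
      unfolding F_def B_def by (auto simp: extensional_def fun_eq_iff)
    show "F ` (hom T (G1 \<times>\<times> G2) \<inter> extensional (carrier T)) \<subseteq> (hom T G1 \<inter> extensional (carrier T)) \<times> (hom T G2 \<inter> extensional (carrier T))"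
    proof
      fix p assume "p \<in> F ` (hom T (G1 \<times>\<times> G2) \<inter> extensional (carrier T))"
      then obtain h where h: "h \<in> hom T (G1 \<times>\<times> G2)" "p = F h" by auto
      have hc: "\<And>x. x \<in> carrier T \<Longrightarrow> h x \<in> carrier G1 \<times> carrier G2" using h by (auto simp: hom_def)
      have hm: "\<And>x y. x \<in> carrier T \<Longrightarrow> y \<in> carrier T \<Longrightarrow> h (x \<otimes>\<^bsub>T\<^esub> y) = h x \<otimes>\<^bsub>G1 \<times>\<times> G2\<^esub> h y"
        using h by (auto simp: hom_def)
      have "\<And>x y. x \<in> carrier T \<Longrightarrow> y \<in> carrier T \<Longrightarrow> fst (h (x \<otimes>\<^bsub>T\<^esub> y)) = fst (h x) \<otimes>\<^bsub>G1\<^esub> fst (h y) \<and> snd (h (x \<otimes>\<^bsub>T\<^esub> y)) = snd (h x) \<otimes>\<^bsub>G2\<^esub> snd (h y)"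
        using hm by (metis mult_DirProd prod.collapse fst_conv snd_conv)
      then show "p \<in> (hom T G1 \<inter> extensional (carrier T)) \<times> (hom T G2 \<inter> extensional (carrier T))"
        unfolding h(2) F_def using hc cl by (auto simp: hom_def Pi_iff mem_Times_iff)
    qed
    show "B ` ((hom T G1 \<inter> extensional (carrier T)) \<times> (hom T G2 \<inter> extensional (carrier T))) \<subseteq> hom T (G1 \<times>\<times> G2) \<inter> extensional (carrier T)"
      unfolding B_def using cl by (auto simp: hom_def Pi_iff)
  qed
  then show ?thesis unfolding num_hom_def by (metis bij_betw_same_card card_cartesian_product)
qed


lemma carrier_tors: "carrier (tors Q) = {x \<in> carrier Q. \<exists>n::nat. n > 0 \<and> x [^]\<^bsub>Q\<^esub> n = \<one>\<^bsub>Q\<^esub>}"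
  by (simp add: tors_def)

lemma mult_tors: "monoid.mult (tors Q) = monoid.mult Q"
  by (simp add: tors_def)

lemma tors_closed:
  assumes Q: "comm_group Q" and x: "x \<in> carrier (tors Q)" and y: "y \<in> carrier (tors Q)"
  shows "x \<otimes>\<^bsub>tors Q\<^esub> y \<in> carrier (tors Q)"
proof -
  interpret Q: comm_group Q by fact
  have xc: "x \<in> carrier Q" and yc: "y \<in> carrier Q" using x y by (auto simp: carrier_tors)
  obtain n :: nat where n: "n > 0" "x [^]\<^bsub>Q\<^esub> n = \<one>\<^bsub>Q\<^esub>" using x by (auto simp: carrier_tors)
  obtain m :: nat where m: "m > 0" "y [^]\<^bsub>Q\<^esub> m = \<one>\<^bsub>Q\<^esub>" using y by (auto simp: carrier_tors)
  have "(x \<otimes>\<^bsub>Q\<^esub> y) [^]\<^bsub>Q\<^esub> (n * m) = x [^]\<^bsub>Q\<^esub> (n * m) \<otimes>\<^bsub>Q\<^esub> y [^]\<^bsub>Q\<^esub> (n * m)"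
    using xc yc by (simp add: Q.pow_mult_distrib Q.m_comm)
  also have "\<dots> = (x [^]\<^bsub>Q\<^esub> n) [^]\<^bsub>Q\<^esub> m \<otimes>\<^bsub>Q\<^esub> (y [^]\<^bsub>Q\<^esub> m) [^]\<^bsub>Q\<^esub> n"
    using xc yc by (simp add: Q.nat_pow_pow mult.commute)
  also have "\<dots> = \<one>\<^bsub>Q\<^esub>" using n m by simp
  finally show ?thesis using n m xc yc by (auto simp: carrier_tors mult_tors intro!: exI[of _ "n * m"])
qed

lemma tors_iso:
  assumes A: "group A" and B: "group B" and \<phi>: "\<phi> \<in> iso A B"
  shows "bij_betw \<phi> (carrier (tors A)) (carrier (tors B))"
proof -
  interpret A: group A by fact
  interpret B: group B by fact
  have h: "\<phi> \<in> hom A B" and bij: "bij_betw \<phi> (carrier A) (carrier B)" using \<phi> by (auto simp: iso_def)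
  have inj: "inj_on \<phi> (carrier A)" using bij bij_betw_def by blast
  have pw: "\<And>x n. x \<in> carrier A \<Longrightarrow> \<phi> (x [^]\<^bsub>A\<^esub> (n::nat)) = \<phi> x [^]\<^bsub>B\<^esub> n"
    using hom_nat_pow[OF h _ A B] by blast
  have one: "\<phi> \<one>\<^bsub>A\<^esub> = \<one>\<^bsub>B\<^esub>" using hom_one[OF h A B] .
  have eq: "\<And>x n. x \<in> carrier A \<Longrightarrow> (x [^]\<^bsub>A\<^esub> (n::nat) = \<one>\<^bsub>A\<^esub>) \<longleftrightarrow> (\<phi> x [^]\<^bsub>B\<^esub> n = \<one>\<^bsub>B\<^esub>)"
  proof -
    fix x n assume x: "x \<in> carrier A"
    have "(x [^]\<^bsub>A\<^esub> (n::nat) = \<one>\<^bsub>A\<^esub>) \<longleftrightarrow> \<phi> (x [^]\<^bsub>A\<^esub> n) = \<phi> \<one>\<^bsub>A\<^esub>"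
      using inj x by (auto dest: inj_onD)
    then show "(x [^]\<^bsub>A\<^esub> (n::nat) = \<one>\<^bsub>A\<^esub>) \<longleftrightarrow> (\<phi> x [^]\<^bsub>B\<^esub> n = \<one>\<^bsub>B\<^esub>)" using pw[OF x] one by simp
  qed
  show ?thesis
    unfolding bij_betw_def
  proof
    show "inj_on \<phi> (carrier (tors A))" using inj by (rule inj_on_subset) (auto simp: carrier_tors)
    show "\<phi> ` carrier (tors A) = carrier (tors B)"
    proof (intro equalityI subsetI)
      fix y assume "y \<in> \<phi> ` carrier (tors A)"
      then obtain x where "x \<in> carrier (tors A)" "y = \<phi> x" by auto
      then show "y \<in> carrier (tors B)" using eq bij bij_betw_apply by (fastforce simp: carrier_tors)
    next
      fix y assume y: "y \<in> carrier (tors B)"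
      then obtain x where x: "x \<in> carrier A" "y = \<phi> x" using bij by (auto simp: carrier_tors bij_betw_def)
      then show "y \<in> \<phi> ` carrier (tors A)" using y eq by (auto simp: carrier_tors)
    qed
  qed
qed

lemma num_hom_tors_iso:
  assumes A: "comm_group A" and B: "comm_group B" and \<phi>: "\<phi> \<in> iso A B"
  shows "num_hom (tors A) G = num_hom (tors B) G"
proof (rule num_hom_cong)
  interpret A: comm_group A by fact
  interpret B: comm_group B by fact
  show "bij_betw \<phi> (carrier (tors A)) (carrier (tors B))" by (rule tors_iso[OF A.is_group B.is_group \<phi>])
  show "\<And>x y. x \<in> carrier (tors A) \<Longrightarrow> y \<in> carrier (tors A) \<Longrightarrow> \<phi> (x \<otimes>\<^bsub>tors A\<^esub> y) = \<phi> x \<otimes>\<^bsub>tors B\<^esub> \<phi> y"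
    using \<phi> by (auto simp: mult_tors carrier_tors iso_def hom_def)
  show "\<And>x y. x \<in> carrier (tors A) \<Longrightarrow> y \<in> carrier (tors A) \<Longrightarrow> x \<otimes>\<^bsub>tors A\<^esub> y \<in> carrier (tors A)"
    using tors_closed[OF A] by blast
  show "\<And>x y. x \<in> carrier (tors B) \<Longrightarrow> y \<in> carrier (tors B) \<Longrightarrow> x \<otimes>\<^bsub>tors B\<^esub> y \<in> carrier (tors B)"
    using tors_closed[OF B] by blast
qed


lemma double_quot_iso:
  assumes G: "comm_group G" and K: "subgroup K G" and H: "subgroup H G" and KH: "K \<subseteq> H"
  shows "\<exists>\<phi>. \<phi> \<in> iso (G Mod H) ((G Mod K) Mod ((\<lambda>h. K #>\<^bsub>G\<^esub> h) ` H))"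
proof -
  interpret G: comm_group G by fact
  let ?Q = "G Mod K"
  let ?pi = "\<lambda>a. K #>\<^bsub>G\<^esub> a"
  let ?P = "?pi ` H"
  have Qc: "comm_group ?Q" by (rule G.abelian_FactGroup[OF K])
  interpret Q: comm_group ?Q by (rule Qc)
  have pih: "?pi \<in> hom G ?Q" using normal.r_coset_hom_Mod[OF G.subgroup_imp_normal[OF K]] .
  interpret pi: group_hom G ?Q ?pi by (intro group_hom.intro group_hom_axioms.intro) (use pih in auto)
  have P: "subgroup ?P ?Q" by (rule pi.subgroup_img_is_subgroup[OF H])
  have Q'c: "comm_group (?Q Mod ?P)" by (rule Q.abelian_FactGroup[OF P])
  interpret Q': comm_group "?Q Mod ?P" by (rule Q'c)
  have rhoh: "(\<lambda>Z. r_coset ?Q ?P Z) \<in> hom ?Q (?Q Mod ?P)"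
    using normal.r_coset_hom_Mod[OF Q.subgroup_imp_normal[OF P]] .
  let ?psi = "\<lambda>a. r_coset ?Q ?P (?pi a)"
  have psih: "?psi \<in> hom G (?Q Mod ?P)"
    using pih rhoh unfolding hom_def by (auto simp: Pi_iff)
  interpret psi: group_hom G "?Q Mod ?P" ?psi by (intro group_hom.intro group_hom_axioms.intro) (use psih in auto)
  have surj: "?psi ` carrier G = carrier (?Q Mod ?P)"
    by (simp add: carrier_FactGroup image_image)
  have Ks: "K \<subseteq> carrier G" and Hs: "H \<subseteq> carrier G" using K H subgroup.subset by blast+
  have ker: "kernel G (?Q Mod ?P) ?psi = H"
  proof (intro equalityI subsetI)
    fix x assume "x \<in> kernel G (?Q Mod ?P) ?psi"
    then have x: "x \<in> carrier G" and e: "r_coset ?Q ?P (?pi x) = ?P" by (auto simp: kernel_def)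
    have "?pi x \<in> carrier ?Q" using x pih by (auto simp: hom_def)
    then have "?pi x \<in> ?P" using Q.coset_join1[OF e _ P] by blast
    then obtain h where h: "h \<in> H" "?pi x = ?pi h" by auto
    have "x \<in> ?pi x" using G.rcos_self[OF x K] .
    then have "x \<in> ?pi h" using h by simp
    then obtain k where k: "k \<in> K" "x = k \<otimes>\<^bsub>G\<^esub> h" unfolding r_coset_def by auto
    then show "x \<in> H" using h KH H by (auto intro: subgroup.m_closed)
  next
    fix x assume x: "x \<in> H"
    then have xc: "x \<in> carrier G" using Hs by auto
    have "?pi x \<in> ?P" using x by auto
    moreover have "?pi x \<in> carrier ?Q" using xc pih by (auto simp: hom_def)
    ultimately have "r_coset ?Q ?P (?pi x) = ?P" using Q.coset_join2[OF _ P] by blast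
    then show "x \<in> kernel G (?Q Mod ?P) ?psi" using xc by (simp add: kernel_def)
  qed
  show ?thesis using psi.FactGroup_iso_set[OF surj] unfolding ker by blast
qed

lemma num_hom_double_quot:
  assumes G: "comm_group G" and K: "subgroup K G" and H: "subgroup H G" and KH: "K \<subseteq> H"
  shows "num_hom (tors ((G Mod K) Mod ((\<lambda>h. K #>\<^bsub>G\<^esub> h) ` H))) G2 = num_hom (tors (G Mod H)) G2"
proof -
  interpret G: comm_group G by fact
  let ?pi = "\<lambda>a. K #>\<^bsub>G\<^esub> a"
  have Qc: "comm_group (G Mod K)" by (rule G.abelian_FactGroup[OF K])
  interpret Q: comm_group "G Mod K" by (rule Qc)
  have pih: "?pi \<in> hom G (G Mod K)" using normal.r_coset_hom_Mod[OF G.subgroup_imp_normal[OF K]] .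
  interpret pi: group_hom G "G Mod K" ?pi by (intro group_hom.intro group_hom_axioms.intro) (use pih in auto)
  have P: "subgroup (?pi ` H) (G Mod K)" by (rule pi.subgroup_img_is_subgroup[OF H])
  obtain \<phi> where \<phi>: "\<phi> \<in> iso (G Mod H) ((G Mod K) Mod (?pi ` H))" using double_quot_iso[OF G K H KH] by blast
  show ?thesis
    using num_hom_tors_iso[OF G.abelian_FactGroup[OF H] Q.abelian_FactGroup[OF P] \<phi>, of G2] by simp
qed



lemma alt_sum:
  assumes "finite E"
  shows "(\<Sum>D\<in>Pow E. (-1::'r::comm_ring_1) ^ (card E - card D)) = (if E = {} then 1 else 0)"
  using assms
proof (induct E rule: finite_induct)
  case empty
  then show ?case by simp
next
  case (insert x E)
  have fP: "finite (Pow E)" using insert by simp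
  have disj: "Pow E \<inter> insert x ` Pow E = {}" using insert by auto
  have inj: "inj_on (insert x) (Pow E)" using insert by (auto simp: inj_on_def)
  have cD: "\<And>D. D \<in> Pow E \<Longrightarrow> card D \<le> card E" using insert by (auto intro: card_mono)
  have finD: "\<And>D. D \<in> Pow E \<Longrightarrow> finite D" using insert by (auto intro: finite_subset)
  have "(\<Sum>D\<in>Pow (insert x E). (-1::'r) ^ (card (insert x E) - card D))
      = (\<Sum>D\<in>Pow E. (-1::'r) ^ (Suc (card E) - card D)) + (\<Sum>D\<in>insert x ` Pow E. (-1::'r) ^ (Suc (card E) - card D))"
    unfolding Pow_insert using insert fP disj by (simp add: sum.union_disjoint)
  also have "(\<Sum>D\<in>insert x ` Pow E. (-1::'r) ^ (Suc (card E) - card D)) = (\<Sum>D\<in>Pow E. (-1::'r) ^ (Suc (card E) - card (insert x D)))"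
    using inj by (simp add: sum.reindex)
  also have "\<dots> = (\<Sum>D\<in>Pow E. (-1::'r) ^ (card E - card D))"
  proof (rule sum.cong)
    fix D assume D: "D \<in> Pow E"
    then have "x \<notin> D" using insert by auto
    then show "(-1::'r) ^ (Suc (card E) - card (insert x D)) = (-1) ^ (card E - card D)" using finD[OF D] by simp
  qed simp
  also have "(\<Sum>D\<in>Pow E. (-1::'r) ^ (Suc (card E) - card D)) = - (\<Sum>D\<in>Pow E. (-1::'r) ^ (card E - card D))"
    by (simp add: sum_negf[symmetric] Suc_diff_le cD)
  finally show ?case by simp
qed

lemma alt_sum_interval:
  assumes "finite B" "A \<subseteq> B"
  shows "(\<Sum>I\<in>Pow B. if A \<subseteq> I then (-1::'r::comm_ring_1) ^ (card B - card I) else 0) = (if A = B then 1 else 0)"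
proof -
  have fA: "finite A" using assms finite_subset by blast
  have "(\<Sum>I\<in>Pow B. if A \<subseteq> I then (-1::'r) ^ (card B - card I) else 0) = (\<Sum>I\<in>{I \<in> Pow B. A \<subseteq> I}. (-1::'r) ^ (card B - card I))"
    using assms by (subst sum.inter_filter[symmetric]) auto
  also have "{I \<in> Pow B. A \<subseteq> I} = (\<lambda>D. A \<union> D) ` Pow (B - A)"
  proof (intro equalityI subsetI)
    fix I assume "I \<in> {I \<in> Pow B. A \<subseteq> I}"
    then have "I = A \<union> (I - A)" "I - A \<in> Pow (B - A)" by auto
    then show "I \<in> (\<lambda>D. A \<union> D) ` Pow (B - A)" by blast
  qed (use assms in auto)
  also have "(\<Sum>I\<in>(\<lambda>D. A \<union> D) ` Pow (B - A). (-1::'r) ^ (card B - card I)) = (\<Sum>D\<in>Pow (B - A). (-1::'r) ^ (card B - card (A \<union> D)))"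
    by (rule sum.reindex_cong[where l = "\<lambda>D. A \<union> D"]) (auto simp: inj_on_def)
  also have "\<dots> = (\<Sum>D\<in>Pow (B - A). (-1::'r) ^ (card (B - A) - card D))"
  proof (rule sum.cong)
    fix D assume D: "D \<in> Pow (B - A)"
    have fD: "finite D" using D assms finite_subset by blast
    have "card (A \<union> D) = card A + card D" using D fA fD by (subst card_Un_disjoint) auto
    moreover have "card (B - A) = card B - card A" using assms by (simp add: card_Diff_subset fA)
    ultimately show "(-1::'r) ^ (card B - card (A \<union> D)) = (-1) ^ (card (B - A) - card D)" by simp
  qed simp
  also have "\<dots> = (if B - A = {} then 1 else 0)" using assms by (intro alt_sum) simp
  finally show ?thesis using assms by auto
qed

lemma sign_aux:
  fixes p q c :: nat
  assumes "q \<le> c"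
  shows "(-1::'r::comm_ring_1) ^ p * (-1) ^ (c - q) = (-1) ^ (p + q) * (-1) ^ c"
proof -
  have "(-1::'r) ^ (p + q) * (-1) ^ c = (-1) ^ (p + (c - q) + 2 * q)"
    using assms by (simp add: power_add[symmetric] algebra_simps)
  also have "\<dots> = (-1) ^ (p + (c - q))" by (simp add: power_add power_mult)
  finally show ?thesis by (simp add: power_add)
qed


lemma comb_main:
  fixes r :: "nat set \<Rightarrow> nat" and a b :: "nat set \<Rightarrow> 'r::comm_ring_1" and x :: 'r
  assumes fN: "finite N"
    and mono: "\<And>S S'. S \<subseteq> S' \<Longrightarrow> S' \<subseteq> N \<Longrightarrow> r S \<le> r S'"
    and incr: "\<And>S S'. S \<subseteq> S' \<Longrightarrow> S' \<subseteq> N \<Longrightarrow> r S' - r S \<le> card S' - card S"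
  shows "(\<Sum>S\<in>Pow N. a S * b S * (x - 1) ^ (r N - r S)) =
    (\<Sum>I\<in>Pow N. (\<Sum>S\<in>Pow I. a S * (-1) ^ (r I - r S)) *
       (\<Sum>T\<in>Pow (N - I). b (I \<union> T) * (x - 1) ^ ((r N - r I) - (r (I \<union> T) - r I)) * (-1) ^ (card T - (r (I \<union> T) - r I))))"
proof -
  define C where "C = (\<lambda>S S'. a S * b S' * (x - 1) ^ (r N - r S') * (-1::'r) ^ (r S' - r S))"
  have A: "(\<Sum>T\<in>Pow (N - I). b (I \<union> T) * (x - 1) ^ ((r N - r I) - (r (I \<union> T) - r I)) * (-1) ^ (card T - (r (I \<union> T) - r I)))
     = (\<Sum>S'\<in>Pow N. if I \<subseteq> S' then b S' * (x - 1) ^ (r N - r S') * (-1) ^ (card S' - card I - (r S' - r I)) else 0)"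
    if I: "I \<subseteq> N" for I
  proof -
    have "(\<Sum>S'\<in>Pow N. if I \<subseteq> S' then b S' * (x - 1) ^ (r N - r S') * (-1) ^ (card S' - card I - (r S' - r I)) else 0)
       = (\<Sum>S'\<in>{S' \<in> Pow N. I \<subseteq> S'}. b S' * (x - 1) ^ (r N - r S') * (-1) ^ (card S' - card I - (r S' - r I)))"
      using fN by (subst sum.inter_filter[symmetric]) auto
    also have "{S' \<in> Pow N. I \<subseteq> S'} = (\<lambda>T. I \<union> T) ` Pow (N - I)"
    proof (intro equalityI subsetI)
      fix S' assume "S' \<in> {S' \<in> Pow N. I \<subseteq> S'}"
      then have "S' = I \<union> (S' - I)" "S' - I \<in> Pow (N - I)" by auto
      then show "S' \<in> (\<lambda>T. I \<union> T) ` Pow (N - I)" by blast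
    qed (use I in auto)
    also have "(\<Sum>S'\<in>(\<lambda>T. I \<union> T) ` Pow (N - I). b S' * (x - 1) ^ (r N - r S') * (-1) ^ (card S' - card I - (r S' - r I)))
       = (\<Sum>T\<in>Pow (N - I). b (I \<union> T) * (x - 1) ^ (r N - r (I \<union> T)) * (-1) ^ (card (I \<union> T) - card I - (r (I \<union> T) - r I)))"
      by (rule sum.reindex_cong[where l = "\<lambda>T. I \<union> T"]) (auto simp: inj_on_def)
    also have "\<dots> = (\<Sum>T\<in>Pow (N - I). b (I \<union> T) * (x - 1) ^ ((r N - r I) - (r (I \<union> T) - r I)) * (-1) ^ (card T - (r (I \<union> T) - r I)))"
    proof (rule sum.cong)
      fix T assume T: "T \<in> Pow (N - I)"
      have fI: "finite I" using I fN finite_subset by auto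
      have fT: "finite T" using T fN by (meson Diff_subset PowD finite_subset subset_trans)
      have "card (I \<union> T) = card I + card T" using T fI fT by (subst card_Un_disjoint) auto
      moreover have "I \<union> T \<subseteq> N" using I T by auto
      then have "r I \<le> r (I \<union> T)" "r (I \<union> T) \<le> r N" using mono by auto
      ultimately show "b (I \<union> T) * (x - 1) ^ (r N - r (I \<union> T)) * (-1) ^ (card (I \<union> T) - card I - (r (I \<union> T) - r I))
          = b (I \<union> T) * (x - 1) ^ ((r N - r I) - (r (I \<union> T) - r I)) * (-1) ^ (card T - (r (I \<union> T) - r I))"
        by (simp add: diff_diff_eq)
    qed simp
    finally show ?thesis by simp
  qed
  have B: "(\<Sum>S\<in>Pow I. a S * (-1) ^ (r I - r S)) = (\<Sum>S\<in>Pow N. if S \<subseteq> I then a S * (-1) ^ (r I - r S) else 0)"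
    if I: "I \<subseteq> N" for I
  proof -
    have "{S \<in> Pow N. S \<subseteq> I} = Pow I" using I by auto
    then show ?thesis using fN by (subst sum.inter_filter[symmetric]) auto
  qed
  have "(\<Sum>I\<in>Pow N. (\<Sum>S\<in>Pow I. a S * (-1) ^ (r I - r S)) *
       (\<Sum>T\<in>Pow (N - I). b (I \<union> T) * (x - 1) ^ ((r N - r I) - (r (I \<union> T) - r I)) * (-1) ^ (card T - (r (I \<union> T) - r I))))
     = (\<Sum>I\<in>Pow N. \<Sum>S\<in>Pow N. \<Sum>S'\<in>Pow N. if S \<subseteq> I \<and> I \<subseteq> S' then C S S' * (-1) ^ (card S' - card I) else 0)"
  proof (rule sum.cong[OF refl])
    fix I assume I: "I \<in> Pow N"
    have "(\<Sum>S\<in>Pow I. a S * (-1) ^ (r I - r S)) *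
       (\<Sum>T\<in>Pow (N - I). b (I \<union> T) * (x - 1) ^ ((r N - r I) - (r (I \<union> T) - r I)) * (-1) ^ (card T - (r (I \<union> T) - r I)))
      = (\<Sum>S\<in>Pow N. if S \<subseteq> I then a S * (-1) ^ (r I - r S) else 0) *
        (\<Sum>S'\<in>Pow N. if I \<subseteq> S' then b S' * (x - 1) ^ (r N - r S') * (-1) ^ (card S' - card I - (r S' - r I)) else 0)"
      using A B I by simp
    also have "\<dots> = (\<Sum>S\<in>Pow N. \<Sum>S'\<in>Pow N. (if S \<subseteq> I then a S * (-1) ^ (r I - r S) else 0) *
        (if I \<subseteq> S' then b S' * (x - 1) ^ (r N - r S') * (-1) ^ (card S' - card I - (r S' - r I)) else 0))"
      by (rule sum_product)
    also have "\<dots> = (\<Sum>S\<in>Pow N. \<Sum>S'\<in>Pow N. if S \<subseteq> I \<and> I \<subseteq> S' then C S S' * (-1) ^ (card S' - card I) else 0)"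
    proof (intro sum.cong refl)
      fix S S' assume S: "S \<in> Pow N" and S': "S' \<in> Pow N"
      show "(if S \<subseteq> I then a S * (-1) ^ (r I - r S) else 0) *
        (if I \<subseteq> S' then b S' * (x - 1) ^ (r N - r S') * (-1) ^ (card S' - card I - (r S' - r I)) else 0)
        = (if S \<subseteq> I \<and> I \<subseteq> S' then C S S' * (-1) ^ (card S' - card I) else 0)"
      proof (cases "S \<subseteq> I \<and> I \<subseteq> S'")
        case True
        have le: "r S' - r I \<le> card S' - card I" using incr True S' by auto
        have m1: "r S \<le> r I" "r I \<le> r S'" using mono True S' by auto
        have "(-1::'r) ^ (r I - r S) * (-1) ^ (card S' - card I - (r S' - r I)) = (-1) ^ ((r I - r S) + (r S' - r I)) * (-1) ^ (card S' - card I)"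
          by (rule sign_aux[OF le])
        also have "(r I - r S) + (r S' - r I) = r S' - r S" using m1 by simp
        finally have sg: "(-1::'r) ^ (r I - r S) * (-1) ^ (card S' - card I - (r S' - r I)) = (-1) ^ (r S' - r S) * (-1) ^ (card S' - card I)" .
        have "a S * (-1) ^ (r I - r S) * (b S' * (x - 1) ^ (r N - r S') * (-1) ^ (card S' - card I - (r S' - r I)))
           = a S * b S' * (x - 1) ^ (r N - r S') * ((-1::'r) ^ (r I - r S) * (-1) ^ (card S' - card I - (r S' - r I)))"
          by (simp add: algebra_simps)
        also have "\<dots> = C S S' * (-1) ^ (card S' - card I)" unfolding sg C_def by (simp add: algebra_simps)
        finally show ?thesis using True by simp
      qed auto
    qed
    finally show "(\<Sum>S\<in>Pow I. a S * (-1) ^ (r I - r S)) *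
       (\<Sum>T\<in>Pow (N - I). b (I \<union> T) * (x - 1) ^ ((r N - r I) - (r (I \<union> T) - r I)) * (-1) ^ (card T - (r (I \<union> T) - r I)))
      = (\<Sum>S\<in>Pow N. \<Sum>S'\<in>Pow N. if S \<subseteq> I \<and> I \<subseteq> S' then C S S' * (-1) ^ (card S' - card I) else 0)" .
  qed
  also have "\<dots> = (\<Sum>S\<in>Pow N. \<Sum>S'\<in>Pow N. \<Sum>I\<in>Pow N. if S \<subseteq> I \<and> I \<subseteq> S' then C S S' * (-1) ^ (card S' - card I) else 0)"
    by (subst sum.swap) (rule sum.cong[OF refl], rule sum.swap)
  also have "\<dots> = (\<Sum>S\<in>Pow N. \<Sum>S'\<in>Pow N. if S = S' then C S S' else 0)"
  proof (intro sum.cong refl)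
    fix S S' assume S: "S \<in> Pow N" and S': "S' \<in> Pow N"
    have fS': "finite S'" using S' fN finite_subset by auto
    have "(\<Sum>I\<in>Pow N. if S \<subseteq> I \<and> I \<subseteq> S' then C S S' * (-1) ^ (card S' - card I) else 0)
        = C S S' * (\<Sum>I\<in>Pow N. if S \<subseteq> I \<and> I \<subseteq> S' then (-1) ^ (card S' - card I) else 0)"
      by (subst sum_distrib_left) (intro sum.cong refl, simp)
    also have "(\<Sum>I\<in>Pow N. if S \<subseteq> I \<and> I \<subseteq> S' then (-1::'r) ^ (card S' - card I) else 0)
        = (\<Sum>I\<in>Pow S'. if S \<subseteq> I then (-1::'r) ^ (card S' - card I) else 0)"
    proof -
      have "(\<Sum>I\<in>Pow N. if S \<subseteq> I \<and> I \<subseteq> S' then (-1::'r) ^ (card S' - card I) else 0)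
          = (\<Sum>I\<in>Pow N. if I \<in> Pow S' then (if S \<subseteq> I then (-1::'r) ^ (card S' - card I) else 0) else 0)"
        by (intro sum.cong) auto
      also have "\<dots> = (\<Sum>I\<in>Pow N \<inter> Pow S'. if S \<subseteq> I then (-1::'r) ^ (card S' - card I) else 0)"
        using fN by (subst sum.inter_restrict) auto
      also have "Pow N \<inter> Pow S' = Pow S'" using S' by auto
      finally show ?thesis .
    qed
    also have "\<dots> = (if S = S' then 1 else 0)"
    proof (cases "S \<subseteq> S'")
      case True
      then show ?thesis by (rule alt_sum_interval[OF fS'])
    next
      case False
      then have "\<And>I. I \<in> Pow S' \<Longrightarrow> \<not> S \<subseteq> I" by auto
      then show ?thesis using False by (auto intro!: sum.neutral)
    qed
    finally show "(\<Sum>I\<in>Pow N. if S \<subseteq> I \<and> I \<subseteq> S' then C S S' * (-1) ^ (card S' - card I) else 0) = (if S = S' then C S S' else 0)"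
      by simp
  qed
  also have "\<dots> = (\<Sum>S\<in>Pow N. C S S)"
    by (intro sum.cong refl) (simp add: sum.delta fN)
  also have "\<dots> = (\<Sum>S\<in>Pow N. a S * b S * (x - 1) ^ (r N - r S))"
    unfolding C_def by simp
  finally show ?thesis by simp
qed



lemma sub_elems_subset: "S \<subseteq> {..<length A} \<Longrightarrow> sub_elems A S \<subseteq> set A"
  unfolding sub_elems_def by auto

lemma sub_elems_all: "sub_elems A {..<length A} = set A"
  unfolding sub_elems_def by (auto simp: set_conv_nth)

lemma sub_elems_Un: "sub_elems A (S \<union> T) = sub_elems A S \<union> sub_elems A T"
  unfolding sub_elems_def by auto

context comm_group
begin

lemma gen_bound:
  assumes "set A \<subseteq> carrier G" "S \<subseteq> {..<length A}"
  shows "generate G (sub_elems A S) \<subseteq> generate G (set A \<union> {\<one>})"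
  using sub_elems_subset[OF assms(2)] by (intro mono_generate) auto

lemma gen_subgroup:
  assumes "set A \<subseteq> carrier G" "S \<subseteq> {..<length A}"
  shows "subgroup (generate G (sub_elems A S)) G"
  using sub_elems_subset[OF assms(2)] assms(1) by (intro generate_is_subgroup) auto

lemma r_mono:
  assumes "set A \<subseteq> carrier G" "S \<subseteq> S'" "S' \<subseteq> {..<length A}"
  shows "grank G (generate G (sub_elems A S)) \<le> grank G (generate G (sub_elems A S'))"
proof -
  have "generate G (sub_elems A S) \<subseteq> generate G (sub_elems A S')"
    using assms by (intro mono_generate) (auto simp: sub_elems_def)
  then show ?thesis unfolding grank_rkm[OF comm_group_axioms]
    using rkm_mono[OF _ assms(1) triv_subgroup gen_bound[OF assms(1,3)]] by simp
qed

lemma r_add: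
  assumes A: "set A \<subseteq> carrier G" and SS: "S \<subseteq> S'" "S' \<subseteq> {..<length A}"
  shows "rkm G {\<one>} (generate G (sub_elems A S')) =
     rkm G (generate G (sub_elems A S)) (generate G (sub_elems A S')) + rkm G {\<one>} (generate G (sub_elems A S))"
proof (rule rkm_add[OF _ A triv_subgroup])
  show "subgroup (generate G (sub_elems A S)) G" using gen_subgroup A SS by auto
  show "{\<one>} \<subseteq> generate G (sub_elems A S)" using generate.one by auto
  show "generate G (sub_elems A S) \<subseteq> generate G (sub_elems A S')"
    using SS by (intro mono_generate) (auto simp: sub_elems_def)
  show "generate G (sub_elems A S') \<subseteq> generate G (set A \<union> {\<one>})" by (rule gen_bound[OF A SS(2)])
qed simp

lemma r_incr:
  assumes A: "set A \<subseteq> carrier G" and SS: "S \<subseteq> S'" "S' \<subseteq> {..<length A}"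
  shows "grank G (generate G (sub_elems A S')) - grank G (generate G (sub_elems A S)) \<le> card S' - card S"
proof -
  let ?K = "generate G (sub_elems A S)"
  let ?H = "generate G (sub_elems A S')"
  have K: "subgroup ?K G" using gen_subgroup A SS by auto
  have Xs: "sub_elems A (S' - S) \<subseteq> carrier G" using sub_elems_subset[of "S' - S" A] SS A by auto
  have "sub_elems A S' \<subseteq> sub_elems A (S' - S) \<union> ?K"
    using generate.incl[of _ "sub_elems A S" G] by (auto simp: sub_elems_def)
  then have Hb: "?H \<subseteq> generate G (sub_elems A (S' - S) \<union> ?K)" by (rule mono_generate)
  have "rkm G ?K ?H \<le> card (sub_elems A (S' - S))"
  proof (rule rkm_props(3)[OF _ Xs K Hb])
    have "finite (S' - S)" using SS by (meson Diff_subset finite_lessThan finite_subset subset_trans)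
    then show "finite (sub_elems A (S' - S))" by (simp add: sub_elems_def)
  qed
  also have "\<dots> \<le> card (S' - S)" unfolding sub_elems_def
    using SS finite_subset by (intro card_image_le) (auto intro: finite_subset)
  also have "\<dots> = card S' - card S" using SS by (intro card_Diff_subset) (auto intro: finite_subset)
  finally show ?thesis using r_add[OF A SS] unfolding grank_rkm[OF comm_group_axioms] by simp
qed


lemma quot_gen:
  assumes A: "set A \<subseteq> carrier G" and I: "I \<subseteq> {..<length A}" and T: "T \<subseteq> {..<length A}"
  shows "generate (G Mod generate G (sub_elems A I)) ((\<lambda>a. generate G (sub_elems A I) #> a) ` sub_elems A T)
       = (\<lambda>a. generate G (sub_elems A I) #> a) ` generate G (sub_elems A (I \<union> T))"
proof -
  let ?K = "generate G (sub_elems A I)"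
  let ?Q = "G Mod ?K"
  let ?pi = "\<lambda>a. ?K #> a"
  have K: "subgroup ?K G" using gen_subgroup A I by auto
  have Qc: "comm_group ?Q" by (rule abelian_FactGroup[OF K])
  interpret Q: comm_group ?Q by (rule Qc)
  have pih: "?pi \<in> hom G ?Q" using normal.r_coset_hom_Mod[OF subgroup_imp_normal[OF K]] .
  interpret pi: group_hom G ?Q ?pi by (intro group_hom.intro group_hom_axioms.intro) (use pih in auto)
  have EI: "sub_elems A I \<subseteq> carrier G" and ET: "sub_elems A T \<subseteq> carrier G"
    using sub_elems_subset A I T by blast+
  have piET: "?pi ` sub_elems A T \<subseteq> carrier ?Q" using ET pih by (auto simp: hom_def)
  have piEI: "?pi ` sub_elems A I \<subseteq> {\<one>\<^bsub>?Q\<^esub>}"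
  proof
    fix z assume "z \<in> ?pi ` sub_elems A I"
    then obtain a where a: "a \<in> sub_elems A I" "z = ?pi a" by auto
    have "a \<in> ?K" using a(1) generate.incl by fast
    then have "?pi a = ?K" using coset_join2[OF _ K] EI a(1) by blast
    then show "z \<in> {\<one>\<^bsub>?Q\<^esub>}" using a by simp
  qed
  have "generate ?Q (?pi ` sub_elems A T) = generate ?Q (?pi ` sub_elems A (I \<union> T))"
  proof (rule equalityI)
    show "generate ?Q (?pi ` sub_elems A T) \<subseteq> generate ?Q (?pi ` sub_elems A (I \<union> T))"
      by (rule Q.mono_generate) (auto simp: sub_elems_Un)
    have sg: "subgroup (generate ?Q (?pi ` sub_elems A T)) ?Q" using piET by (rule Q.generate_is_subgroup)
    have "?pi ` sub_elems A (I \<union> T) \<subseteq> generate ?Q (?pi ` sub_elems A T)"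
    proof
      fix z assume "z \<in> ?pi ` sub_elems A (I \<union> T)"
      then have "z \<in> ?pi ` sub_elems A T \<or> z \<in> ?pi ` sub_elems A I" by (auto simp: sub_elems_Un)
      then show "z \<in> generate ?Q (?pi ` sub_elems A T)"
        using piEI generate.incl[of z "?pi ` sub_elems A T" ?Q] generate.one[of ?Q] by auto
    qed
    then show "generate ?Q (?pi ` sub_elems A (I \<union> T)) \<subseteq> generate ?Q (?pi ` sub_elems A T)"
      by (rule Q.generate_subgroup_incl[OF _ sg])
  qed
  also have "\<dots> = ?pi ` generate G (sub_elems A (I \<union> T))"
    using EI ET by (intro pi.generate_img) (auto simp: sub_elems_Un)
  finally show ?thesis .
qed

lemma quot_rank:
  assumes A: "set A \<subseteq> carrier G" and I: "I \<subseteq> {..<length A}" and T: "T \<subseteq> {..<length A}"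
  shows "grank (G Mod generate G (sub_elems A I))
           (generate (G Mod generate G (sub_elems A I)) ((\<lambda>a. generate G (sub_elems A I) #> a) ` sub_elems A T))
       = grank G (generate G (sub_elems A (I \<union> T))) - grank G (generate G (sub_elems A I))"
proof -
  let ?K = "generate G (sub_elems A I)"
  have K: "subgroup ?K G" using gen_subgroup A I by auto
  have IT: "I \<union> T \<subseteq> {..<length A}" using I T by auto
  have Hc: "generate G (sub_elems A (I \<union> T)) \<subseteq> carrier G"
    using gen_subgroup[OF A IT] subgroup.subset by blast
  have "grank (G Mod ?K) ((\<lambda>a. ?K #> a) ` generate G (sub_elems A (I \<union> T))) = rkm G ?K (generate G (sub_elems A (I \<union> T)))"
    by (rule grank_quot[OF comm_group_axioms K Hc])
  moreover have "rkm G {\<one>} (generate G (sub_elems A (I \<union> T))) = rkm G ?K (generate G (sub_elems A (I \<union> T))) + rkm G {\<one>} ?K"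
    using r_add[OF A _ IT, of I] by simp
  ultimately show ?thesis unfolding quot_gen[OF A I T] grank_rkm[OF comm_group_axioms] by simp
qed

lemma quot_mult:
  assumes A: "set A \<subseteq> carrier G" and I: "I \<subseteq> {..<length A}" and T: "T \<subseteq> {..<length A}"
  shows "mult_m (G Mod generate G (sub_elems A I)) ((\<lambda>a. generate G (sub_elems A I) #> a) ` sub_elems A T) G2
       = mult_m G (sub_elems A (I \<union> T)) G2"
proof -
  let ?K = "generate G (sub_elems A I)"
  have K: "subgroup ?K G" using gen_subgroup A I by auto
  have IT: "I \<union> T \<subseteq> {..<length A}" using I T by auto
  have H: "subgroup (generate G (sub_elems A (I \<union> T))) G" using gen_subgroup[OF A IT] .
  have KH: "?K \<subseteq> generate G (sub_elems A (I \<union> T))" by (rule mono_generate) (auto simp: sub_elems_Un)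
  show ?thesis
    unfolding mult_m_def quot_gen[OF A I T] using num_hom_double_quot[OF comm_group_axioms K H KH] by simp
qed

end

lemma sum_Pow_reindex:
  assumes "distinct e"
  shows "(\<Sum>J\<in>Pow {..<length e}. g ((!) e ` J) (card J)) = (\<Sum>S\<in>Pow (set e). g S (card S))"
proof -
  have inj: "inj_on ((!) e) {..<length e}" using assms by (simp add: inj_on_def nth_eq_iff_index_eq)
  have im: "(!) e ` {..<length e} = set e" by (auto simp: set_conv_nth)
  have "(\<Sum>S\<in>Pow (set e). g S (card S)) = (\<Sum>S\<in>image ((!) e) ` Pow {..<length e}. g S (card S))"
    using image_Pow_surj[OF im] by simp
  also have "\<dots> = (\<Sum>J\<in>Pow {..<length e}. g ((!) e ` J) (card ((!) e ` J)))"
    by (rule sum.reindex[OF inj_on_image_Pow[OF inj], unfolded comp_def])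
  also have "\<dots> = (\<Sum>J\<in>Pow {..<length e}. g ((!) e ` J) (card J))"
  proof (rule sum.cong[OF refl])
    fix J assume "J \<in> Pow {..<length e}"
    then have "inj_on ((!) e) J" using inj inj_on_subset by blast
    then show "g ((!) e ` J) (card ((!) e ` J)) = g ((!) e ` J) (card J)" by (simp add: card_image)
  qed
  finally show ?thesis by simp
qed

lemma sub_elems_map: "J \<subseteq> {..<length e} \<Longrightarrow> sub_elems (map f e) J = f ` ((!) e ` J)"
proof -
  assume "J \<subseteq> {..<length e}"
  then have "\<And>i. i \<in> J \<Longrightarrow> map f e ! i = f (e ! i)" by auto
  then show ?thesis unfolding sub_elems_def image_image by (rule image_cong[OF refl])
qed

lemma set_filter_upt: "set (filter P [0..<n]) = {i. i < n \<and> P i}"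
  by auto

lemma sublist_idx_eq: "sublist_idx A I = map ((!) A) (filter (\<lambda>i. i \<in> I) [0..<length A])"
  unfolding sublist_idx_def by simp

lemma contr_eq: "contr G A I = map (\<lambda>a. generate G (sub_elems A I) #>\<^bsub>G\<^esub> a) (map ((!) A) (filter (\<lambda>i. i \<notin> I) [0..<length A]))"
  unfolding contr_def by simp



lemma T3:
  fixes \<Gamma> :: "('a, 'b) monoid_scheme" and A :: "'a list"
    and G1 :: "('c, 'd) monoid_scheme" and G2 :: "('e, 'f) monoid_scheme"
    and x y :: "'r::comm_ring_1"
  assumes G: "comm_group \<Gamma>" and A: "set A \<subseteq> carrier \<Gamma>"
  shows "tutteG \<Gamma> A (G1 \<times>\<times> G2) x y =
    (\<Sum>S\<in>Pow {..<length A}. (of_nat (mult_m \<Gamma> (sub_elems A S) G1) * (y - 1) ^ (card S - grank \<Gamma> (generate \<Gamma> (sub_elems A S))))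
        * of_nat (mult_m \<Gamma> (sub_elems A S) G2)
        * (x - 1) ^ (grank \<Gamma> (generate \<Gamma> (sub_elems A {..<length A})) - grank \<Gamma> (generate \<Gamma> (sub_elems A S))))"
  unfolding tutteG_def sub_elems_all
proof (rule sum.cong[OF refl])
  interpret G: comm_group \<Gamma> by fact
  fix S assume S: "S \<in> Pow {..<length A}"
  have K: "subgroup (generate \<Gamma> (sub_elems A S)) \<Gamma>" using G.gen_subgroup[OF A] S by auto
  have Qc: "comm_group (\<Gamma> Mod generate \<Gamma> (sub_elems A S))" by (rule G.abelian_FactGroup[OF K])
  have "mult_m \<Gamma> (sub_elems A S) (G1 \<times>\<times> G2) = mult_m \<Gamma> (sub_elems A S) G1 * mult_m \<Gamma> (sub_elems A S) G2"
    unfolding mult_m_def by (rule num_hom_DirProd) (rule tors_closed[OF Qc])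
  then show "of_nat (mult_m \<Gamma> (sub_elems A S) (G1 \<times>\<times> G2)) *
          (x - 1) ^ (grank \<Gamma> (generate \<Gamma> (set A)) - grank \<Gamma> (generate \<Gamma> (sub_elems A S))) *
          (y - 1) ^ (card S - grank \<Gamma> (generate \<Gamma> (sub_elems A S))) =
      of_nat (mult_m \<Gamma> (sub_elems A S) G1) * (y - 1) ^ (card S - grank \<Gamma> (generate \<Gamma> (sub_elems A S))) *
          of_nat (mult_m \<Gamma> (sub_elems A S) G2) *
          (x - 1) ^ (grank \<Gamma> (generate \<Gamma> (set A)) - grank \<Gamma> (generate \<Gamma> (sub_elems A S)))"
    by (simp add: algebra_simps)
qed

lemma T1:
  fixes \<Gamma> :: "('a, 'b) monoid_scheme" and A :: "'a list"
    and G1 :: "('c, 'd) monoid_scheme" and y :: "'r::comm_ring_1"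
  assumes I: "I \<subseteq> {..<length A}"
  shows "tutteG \<Gamma> (sublist_idx A I) G1 0 y =
    (\<Sum>S\<in>Pow I. (of_nat (mult_m \<Gamma> (sub_elems A S) G1) * (y - 1) ^ (card S - grank \<Gamma> (generate \<Gamma> (sub_elems A S))))
        * (-1) ^ (grank \<Gamma> (generate \<Gamma> (sub_elems A I)) - grank \<Gamma> (generate \<Gamma> (sub_elems A S))))"
proof -
  define e where "e = filter (\<lambda>i. i \<in> I) [0..<length A]"
  have de: "distinct e" unfolding e_def by simp
  have se: "set e = I" unfolding e_def using I by auto
  define g where "g = (\<lambda>S c. of_nat (mult_m \<Gamma> (sub_elems A S) G1) *
      (0 - 1 :: 'r) ^ (grank \<Gamma> (generate \<Gamma> (sub_elems A I)) - grank \<Gamma> (generate \<Gamma> (sub_elems A S))) *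
      (y - 1) ^ (c - grank \<Gamma> (generate \<Gamma> (sub_elems A S))))"
  have sl: "sublist_idx A I = map ((!) A) e" unfolding e_def sublist_idx_eq ..
  have setL: "set (map ((!) A) e) = sub_elems A I" unfolding sub_elems_def using se by auto
  have subL: "\<And>J. J \<subseteq> {..<length e} \<Longrightarrow> sub_elems (map ((!) A) e) J = sub_elems A ((!) e ` J)"
    using sub_elems_map unfolding sub_elems_def by (metis sub_elems_def)
  have "tutteG \<Gamma> (sublist_idx A I) G1 0 y = (\<Sum>J\<in>Pow {..<length e}. g ((!) e ` J) (card J))"
    unfolding tutteG_def sl setL g_def length_map
    by (rule sum.cong[OF refl]) (simp add: subL)
  also have "\<dots> = (\<Sum>S\<in>Pow I. g S (card S))" using sum_Pow_reindex[OF de, of g] se by simp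
  finally show ?thesis unfolding g_def by (simp add: algebra_simps)
qed


lemma T2:
  fixes \<Gamma> :: "('a, 'b) monoid_scheme" and A :: "'a list"
    and G2 :: "('e, 'f) monoid_scheme" and x :: "'r::comm_ring_1"
  assumes G: "comm_group \<Gamma>" and A: "set A \<subseteq> carrier \<Gamma>" and I: "I \<subseteq> {..<length A}"
  shows "tutteG (\<Gamma> Mod (generate \<Gamma> (sub_elems A I))) (contr \<Gamma> A I) G2 x 0 =
    (\<Sum>T\<in>Pow ({..<length A} - I). of_nat (mult_m \<Gamma> (sub_elems A (I \<union> T)) G2)
       * (x - 1) ^ ((grank \<Gamma> (generate \<Gamma> (sub_elems A {..<length A})) - grank \<Gamma> (generate \<Gamma> (sub_elems A I)))
                    - (grank \<Gamma> (generate \<Gamma> (sub_elems A (I \<union> T))) - grank \<Gamma> (generate \<Gamma> (sub_elems A I))))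
       * (-1) ^ (card T - (grank \<Gamma> (generate \<Gamma> (sub_elems A (I \<union> T))) - grank \<Gamma> (generate \<Gamma> (sub_elems A I)))))"
proof -
  interpret G: comm_group \<Gamma> by fact
  let ?K = "generate \<Gamma> (sub_elems A I)"
  let ?pi = "\<lambda>a. ?K #>\<^bsub>\<Gamma>\<^esub> a"
  let ?Q = "\<Gamma> Mod ?K"
  let ?r = "\<lambda>S. grank \<Gamma> (generate \<Gamma> (sub_elems A S))"
  define e where "e = filter (\<lambda>i. i \<notin> I) [0..<length A]"
  have de: "distinct e" unfolding e_def by simp
  have se: "set e = {..<length A} - I" unfolding e_def by auto
  have cl: "contr \<Gamma> A I = map (\<lambda>i. ?pi (A ! i)) e" unfolding e_def contr_def ..
  have setL: "set (map (\<lambda>i. ?pi (A ! i)) e) = ?pi ` sub_elems A ({..<length A} - I)"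
    unfolding sub_elems_def using se by auto
  have subL: "\<And>J. J \<subseteq> {..<length e} \<Longrightarrow> sub_elems (map (\<lambda>i. ?pi (A ! i)) e) J = ?pi ` sub_elems A ((!) e ` J)"
    using sub_elems_map unfolding sub_elems_def by (metis image_image)
  have NI: "{..<length A} - I \<subseteq> {..<length A}" by auto
  have full: "grank ?Q (generate ?Q (?pi ` sub_elems A ({..<length A} - I))) = ?r {..<length A} - ?r I"
    using G.quot_rank[OF A I NI] I by (simp add: Un_absorb1 Un_Diff_cancel)
  define g where "g = (\<lambda>T c. of_nat (mult_m \<Gamma> (sub_elems A (I \<union> T)) G2)
       * (x - 1) ^ ((?r {..<length A} - ?r I) - (?r (I \<union> T) - ?r I))
       * (0 - 1 :: 'r) ^ (c - (?r (I \<union> T) - ?r I)))"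
  have "tutteG ?Q (contr \<Gamma> A I) G2 x 0 = (\<Sum>J\<in>Pow {..<length e}. g ((!) e ` J) (card J))"
    unfolding tutteG_def cl setL length_map full
  proof (rule sum.cong[OF refl])
    fix J assume J: "J \<in> Pow {..<length e}"
    have T: "(!) e ` J \<subseteq> {..<length A}" using J se nth_mem by fastforce
    show "of_nat (mult_m ?Q (sub_elems (map (\<lambda>i. ?pi (A ! i)) e) J) G2) *
          (x - 1) ^ (?r {..<length A} - ?r I - grank ?Q (generate ?Q (sub_elems (map (\<lambda>i. ?pi (A ! i)) e) J))) *
          (0 - 1) ^ (card J - grank ?Q (generate ?Q (sub_elems (map (\<lambda>i. ?pi (A ! i)) e) J))) =
          g ((!) e ` J) (card J)"
      unfolding subL[OF PowD[OF J]] g_def G.quot_rank[OF A I T] G.quot_mult[OF A I T] ..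
  qed
  also have "\<dots> = (\<Sum>T\<in>Pow ({..<length A} - I). g T (card T))" using sum_Pow_reindex[OF de, of g] se by simp
  finally show ?thesis unfolding g_def by simp
qed


theorem mainTheorem19:
  fixes \<Gamma> :: "('a, 'b) monoid_scheme" and A :: "'a list"
    and G1 :: "('c, 'd) monoid_scheme" and G2 :: "('e, 'f) monoid_scheme"
    and x y :: "'r::comm_ring_1"
  assumes "comm_group \<Gamma>" and "fin_gen \<Gamma>" and "set A \<subseteq> carrier \<Gamma>"
    and "comm_group G1" and "torsion_wise_finite G1"
    and "comm_group G2" and "torsion_wise_finite G2"
  shows "tutteG \<Gamma> A (G1 \<times>\<times> G2) x y =
    (\<Sum>I\<in>Pow {..<length A}.
       tutteG \<Gamma> (sublist_idx A I) G1 0 y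
       * tutteG (\<Gamma> Mod (generate \<Gamma> (sub_elems A I))) (contr \<Gamma> A I) G2 x 0)"
proof -
  interpret G: comm_group \<Gamma> by fact
  have A: "set A \<subseteq> carrier \<Gamma>" by fact
  let ?r = "\<lambda>S. grank \<Gamma> (generate \<Gamma> (sub_elems A S))"
  let ?a = "\<lambda>S. of_nat (mult_m \<Gamma> (sub_elems A S) G1) * (y - 1) ^ (card S - ?r S)"
  let ?b = "\<lambda>S. (of_nat (mult_m \<Gamma> (sub_elems A S) G2) :: 'r)"
  have "(\<Sum>I\<in>Pow {..<length A}.
       tutteG \<Gamma> (sublist_idx A I) G1 0 y
       * tutteG (\<Gamma> Mod (generate \<Gamma> (sub_elems A I))) (contr \<Gamma> A I) G2 x 0)
    = (\<Sum>I\<in>Pow {..<length A}. (\<Sum>S\<in>Pow I. ?a S * (-1) ^ (?r I - ?r S)) *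
       (\<Sum>T\<in>Pow ({..<length A} - I). ?b (I \<union> T) * (x - 1) ^ ((?r {..<length A} - ?r I) - (?r (I \<union> T) - ?r I)) * (-1) ^ (card T - (?r (I \<union> T) - ?r I))))"
  proof (rule sum.cong[OF refl])
    fix I assume "I \<in> Pow {..<length A}"
    then have I: "I \<subseteq> {..<length A}" by simp
    show "tutteG \<Gamma> (sublist_idx A I) G1 0 y * tutteG (\<Gamma> Mod (generate \<Gamma> (sub_elems A I))) (contr \<Gamma> A I) G2 x 0
      = (\<Sum>S\<in>Pow I. ?a S * (-1) ^ (?r I - ?r S)) *
       (\<Sum>T\<in>Pow ({..<length A} - I). ?b (I \<union> T) * (x - 1) ^ ((?r {..<length A} - ?r I) - (?r (I \<union> T) - ?r I)) * (-1) ^ (card T - (?r (I \<union> T) - ?r I)))"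
      unfolding T1[OF I] T2[OF assms(1) A I] ..
  qed
  also have "\<dots> = (\<Sum>S\<in>Pow {..<length A}. ?a S * ?b S * (x - 1) ^ (?r {..<length A} - ?r S))"
    by (rule comb_main[symmetric]) (auto intro: G.r_mono[OF A] G.r_incr[OF A])
  also have "\<dots> = tutteG \<Gamma> A (G1 \<times>\<times> G2) x y"
    unfolding T3[OF assms(1) A] ..
  finally show ?thesis ..
qed



end
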